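(* In the setting of the context, assume condition (A): for each $1\le j\le d$ and $x_j\in D_j$ there exists $i$ with $\tilde\xi^i\in D$ and $\tilde\xi^i_j\in B_j(x_j,h_j)$. Then there exists a solution of the SBF system satisfying the SBF constraints. If $(\hat{\mathbf{f}}_j)_{j\le d}$ and $(\hat{\mathbf{f}}^\star_j)_{j\le d}$ are solutions of the SBF system, then $\bigoplus_{j=1}^d\hat{\mathbf{f}}_j(x_j)=\bigoplus_{j=1}^d\hat{\mathbf{f}}^\star_j(x_j)$ for $\hat P^D_\xi$-almost every $\mathbf{x}\in D$. Moreover, if both solutions satisfy the SBF constraints and for each $\mathbf{x}\in D$ there is an $i$ with $\tilde\xi^i\in D\cap\prod_{j=1}^dB_j(x_j,h_j)$, then $\hat{\mathbf{f}}_j=\hat{\mathbf{f}}^\star_j$ Lebesgue-almost everywhere on $D_j$ for all $1\le j\le d$.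
   Context: $\mathbb{H}$ is a separable real Hilbert space with operations $\oplus,\odot$, subtraction $\ominus$, zero $\mathbf{0}$, norm $\|\cdot\|$; $\mathbb{H}$-valued integrals are Bochner integrals. Fix $d\ge1$, $L_j\in\mathbb{N}$, compact $D_j\subset\mathbb{R}^{L_j}$, $D=\prod_jD_j$; $\|\cdot\|_j$ is the Euclidean norm and $B_j(x,R)$ the open ball in $\mathbb{R}^{L_j}$. Given data $(\tilde\xi^i,\tilde{\mathbf{Y}}^i)$, $1\le i\le n$, with $\tilde\xi^i=(\tilde\xi^i_1,\dots,\tilde\xi^i_d)$, $\tilde\xi^i_j\in\mathbb{R}^{L_j}$, $\tilde{\mathbf{Y}}^i\in\mathbb{H}$ (at least one $\tilde\xi^i\in D$), bandwidths $h_j>0$, and continuous $K_j:[0,\infty)\to[0,\infty)$ positive on $[0,1)$ and zero on $[1,\infty)$. Let $K_{h_j}(x_j,u_j)=h_j^{-L_j}K_j(\|x_j-u_j\|_j/h_j)/\int_{D_j}h_j^{-L_j}K_j(\|t_j-u_j\|_j/h_j)dt_j$ when the denominator is nonzero and $K_{h_j}\equiv|D_j|^{-1}$ otherwise. Let $\hat p_0^D=n^{-1}\sum_iI(\tilde\xi^i\in D)$, $\hat{\mathbf{f}}_0=(\hat p_0^Dn)^{-1}\odot\bigoplus_i(\tilde{\mathbf{Y}}^i\odot I(\tilde\xi^i\in D))$, $\hat p^D(\mathbf{x})=(\hat p_0^Dn)^{-1}\sum_i\prod_jK_{h_j}(x_j,\tilde\xi^i_j)I(\tilde\xi^i\in D)$,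 $\hat p^D_j(x_j)=(\hat p_0^Dn)^{-1}\sum_iK_{h_j}(x_j,\tilde\xi^i_j)I(\tilde\xi^i\in D)$, $\hat p^D_{jk}(x_j,x_k)=(\hat p_0^Dn)^{-1}\sum_iK_{h_j}(x_j,\tilde\xi^i_j)K_{h_k}(x_k,\tilde\xi^i_k)I(\tilde\xi^i\in D)$, $\hat{\mathbf{m}}_j(x_j)=(\hat p^D_j(x_j)\hat p^D_0n)^{-1}\odot\bigoplus_i(\tilde{\mathbf{Y}}^i\odot(K_{h_j}(x_j,\tilde\xi^i_j)I(\tilde\xi^i\in D)))$. The SBF system for maps $\hat{\mathbf{f}}_j:D_j\to\mathbb{H}$ is $\hat{\mathbf{f}}_j(x_j)=\hat{\mathbf{m}}_j(x_j)\ominus\hat{\mathbf{f}}_0\ominus\bigoplus_{k\ne j}\int_{D_k}\hat{\mathbf{f}}_k(x_k)\odot\frac{\hat p^D_{jk}(x_j,x_k)}{\hat p^D_j(x_j)}dx_k$ for all $x_j\in D_j$, $1\le j\le d$; the SBF constraints are $\int_{D_j}\hat{\mathbf{f}}_j\odot\hat p^D_j\,dx_j=\mathbf{0}$ and $\int_{D_j}\|\hat{\mathbf{f}}_j\|^2\hat p^D_jdx_j<\infty$ for all $j$. $\hat P^D_\xi$ is the probability measure $A\mapsto\int_A\hat p^D(\mathbf{x})d\mathbf{x}$ on $\bigotimes_j\mathcal{B}(D_j)$. The data need not be random or i.i.d. *)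

theory Defs
  imports "HOL-Analysis.Analysis"
begin

text \<open>Points of R^L are represented as functions nat => real that are extensional
  on {..<L} (i.e. elements of PiE {..<L} (%_. UNIV)); Lebesgue measure on R^L is
  the product of L copies of lborel.  Block indices j range over {1..d} and data
  indices i over {1..n}.\<close>

definition Leb :: "nat \<Rightarrow> (nat \<Rightarrow> real) measure" where
  "Leb L = PiM {..<L} (\<lambda>_. lborel)"

definition enorm :: "nat \<Rightarrow> (nat \<Rightarrow> real) \<Rightarrow> real" where
  "enorm L x = sqrt (\<Sum>k<L. (x k)\<^sup>2)"

definition Kh :: "nat \<Rightarrow> (nat \<Rightarrow> real) set \<Rightarrow> real \<Rightarrow> (real \<Rightarrow> real)
    \<Rightarrow> (nat \<Rightarrow> real) \<Rightarrow> (nat \<Rightarrow> real) \<Rightarrow> real" where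
  "Kh L D h K x u =
     (let den = (LINT t:D|Leb L. inverse (h ^ L) * K (enorm L (\<lambda>k. t k - u k) / h))
      in if den \<noteq> 0 then inverse (h ^ L) * K (enorm L (\<lambda>k. x k - u k) / h) / den
         else inverse (measure (Leb L) D))"

definition inD :: "nat \<Rightarrow> (nat \<Rightarrow> (nat \<Rightarrow> real) set) \<Rightarrow> (nat \<Rightarrow> nat \<Rightarrow> (nat \<Rightarrow> real)) \<Rightarrow> nat \<Rightarrow> bool" where
  "inD d D \<xi> i \<longleftrightarrow> (\<forall>j\<in>{1..d}. \<xi> i j \<in> D j)"

definition p0 :: "nat \<Rightarrow> (nat \<Rightarrow> (nat \<Rightarrow> real) set) \<Rightarrow> nat \<Rightarrow> (nat \<Rightarrow> nat \<Rightarrow> (nat \<Rightarrow> real)) \<Rightarrow> real" where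
  "p0 d D n \<xi> = (\<Sum>i\<in>{1..n}. of_bool (inD d D \<xi> i)) / real n"

definition f0 :: "nat \<Rightarrow> (nat \<Rightarrow> (nat \<Rightarrow> real) set) \<Rightarrow> nat \<Rightarrow> (nat \<Rightarrow> nat \<Rightarrow> (nat \<Rightarrow> real))
    \<Rightarrow> (nat \<Rightarrow> 'h::real_vector) \<Rightarrow> 'h" where
  "f0 d D n \<xi> Y = inverse (p0 d D n \<xi> * real n) *\<^sub>R
      (\<Sum>i\<in>{1..n}. of_bool (inD d D \<xi> i) *\<^sub>R Y i)"

definition KH where
  "KH L D h K j = Kh (L j) (D j) (h j) (K j)"

definition pD where
  "pD d L D h K n \<xi> (x :: nat \<Rightarrow> nat \<Rightarrow> real) = inverse (p0 d D n \<xi> * real n) *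
      (\<Sum>i\<in>{1..n}. (\<Prod>j\<in>{1..d}. KH L D h K j (x j) (\<xi> i j)) * of_bool (inD d D \<xi> i))"

definition pj where
  "pj d L D h K n \<xi> j xj = inverse (p0 d D n \<xi> * real n) *
      (\<Sum>i\<in>{1..n}. KH L D h K j xj (\<xi> i j) * of_bool (inD d D \<xi> i))"

definition pjk where
  "pjk d L D h K n \<xi> j k xj xk = inverse (p0 d D n \<xi> * real n) *
      (\<Sum>i\<in>{1..n}. KH L D h K j xj (\<xi> i j) * KH L D h K k xk (\<xi> i k) * of_bool (inD d D \<xi> i))"

definition mj :: "_ \<Rightarrow> _ \<Rightarrow> _ \<Rightarrow> _ \<Rightarrow> _ \<Rightarrow> _ \<Rightarrow> _ \<Rightarrow> (nat \<Rightarrow> 'h::real_vector) \<Rightarrow> nat \<Rightarrow> (nat \<Rightarrow> real) \<Rightarrow> 'h" where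
  "mj d L D h K n \<xi> Y j xj = inverse (pj d L D h K n \<xi> j xj * p0 d D n \<xi> * real n) *\<^sub>R
      (\<Sum>i\<in>{1..n}. (KH L D h K j xj (\<xi> i j) * of_bool (inD d D \<xi> i)) *\<^sub>R Y i)"

definition SBF_system :: "nat \<Rightarrow> (nat \<Rightarrow> nat) \<Rightarrow> (nat \<Rightarrow> (nat \<Rightarrow> real) set) \<Rightarrow> (nat \<Rightarrow> real)
    \<Rightarrow> (nat \<Rightarrow> real \<Rightarrow> real) \<Rightarrow> nat \<Rightarrow> (nat \<Rightarrow> nat \<Rightarrow> (nat \<Rightarrow> real))
    \<Rightarrow> (nat \<Rightarrow> 'h::{banach,second_countable_topology}) \<Rightarrow> (nat \<Rightarrow> (nat \<Rightarrow> real) \<Rightarrow> 'h) \<Rightarrow> bool" where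
  "SBF_system d L D h K n \<xi> Y f \<longleftrightarrow>
     (\<forall>j\<in>{1..d}. \<forall>x\<in>D j.
        (\<forall>k\<in>{1..d}-{j}. set_integrable (Leb (L k)) (D k)
            (\<lambda>t. (pjk d L D h K n \<xi> j k x t / pj d L D h K n \<xi> j x) *\<^sub>R f k t)) \<and>
        f j x = mj d L D h K n \<xi> Y j x - f0 d D n \<xi> Y
           - (\<Sum>k\<in>{1..d}-{j}. LINT t:D k|Leb (L k).
                 (pjk d L D h K n \<xi> j k x t / pj d L D h K n \<xi> j x) *\<^sub>R f k t))"

definition SBF_constraints :: "nat \<Rightarrow> (nat \<Rightarrow> nat) \<Rightarrow> (nat \<Rightarrow> (nat \<Rightarrow> real) set) \<Rightarrow> (nat \<Rightarrow> real)
    \<Rightarrow> (nat \<Rightarrow> real \<Rightarrow> real) \<Rightarrow> nat \<Rightarrow> (nat \<Rightarrow> nat \<Rightarrow> (nat \<Rightarrow> real))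
    \<Rightarrow> (nat \<Rightarrow> (nat \<Rightarrow> real) \<Rightarrow> 'h::{banach,second_countable_topology}) \<Rightarrow> bool" where
  "SBF_constraints d L D h K n \<xi> f \<longleftrightarrow>
     (\<forall>j\<in>{1..d}.
        set_integrable (Leb (L j)) (D j) (\<lambda>x. pj d L D h K n \<xi> j x *\<^sub>R f j x) \<and>
        (LINT x:D j|Leb (L j). pj d L D h K n \<xi> j x *\<^sub>R f j x) = 0 \<and>
        (\<integral>\<^sup>+x\<in>D j. ennreal ((norm (f j x))\<^sup>2 * pj d L D h K n \<xi> j x) \<partial>Leb (L j)) < \<infinity>)"

definition PD where
  "PD d L D h K n \<xi> = density (PiM {1..d} (\<lambda>j. restrict_space (Leb (L j)) (D j)))
      (\<lambda>x. ennreal (pD d L D h K n \<xi> x))"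

end

theory Submission
  imports Defs
begin


locale sbf =
  fixes d n :: nat and L :: "nat \<Rightarrow> nat" and D :: "nat \<Rightarrow> (nat \<Rightarrow> real) set"
    and h :: "nat \<Rightarrow> real" and K :: "nat \<Rightarrow> real \<Rightarrow> real" and \<xi> :: "nat \<Rightarrow> nat \<Rightarrow> (nat \<Rightarrow> real)"
  assumes d: "d \<ge> 1"
    and D_space: "\<forall>j\<in>{1..d}. D j \<subseteq> space (Leb (L j))"
    and D_pos: "\<forall>j\<in>{1..d}. measure (Leb (L j)) (D j) > 0"
    and some_in_D: "\<exists>i\<in>{1..n}. inD d D \<xi> i"
    and h: "\<forall>j\<in>{1..d}. h j > 0"
    and K_cont: "\<forall>j\<in>{1..d}. continuous_on {0..} (K j)"
    and K_nonneg: "\<forall>j\<in>{1..d}. \<forall>u\<ge>0. K j u \<ge> 0"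
    and K_pos: "\<forall>j\<in>{1..d}. \<forall>u\<in>{0..<1}. K j u > 0"
    and K_zero: "\<forall>j\<in>{1..d}. \<forall>u\<ge>1. K j u = 0"
    and condA: "\<forall>j\<in>{1..d}. \<forall>x\<in>D j. \<exists>i\<in>{1..n}. inD d D \<xi> i \<and>
                   enorm (L j) (\<lambda>k. \<xi> i j k - x k) < h j"
begin

abbreviation "J \<equiv> {1..d}"
definition "I = {i\<in>{1..n}. inD d D \<xi> i}"
definition "N = real (card I)"
definition "M j = restrict_space (Leb (L j)) (if j \<in> J then D j else {})"
definition "den j u = (LINT t:D j|Leb (L j). inverse (h j ^ L j) * K j (enorm (L j) (\<lambda>k. t k - u k) / h j))"
definition "k j i x = KH L D h K j x (\<xi> i j)"
definition "S j x = (\<Sum>i\<in>I. k j i x)"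
definition "w j i x = k j i x / S j x"
definition "Mc j i l = (\<integral>x. k j i x * k j l x / S j x \<partial>M j)"
definition "Q j r i l = (\<integral>x. k j r x * w j i x * w j l x \<partial>M j)"

lemma k_eq: "k j i x = (if den j (\<xi> i j) \<noteq> 0 then inverse (h j ^ L j) * K j (enorm (L j) (\<lambda>k. x k - \<xi> i j k) / h j) / den j (\<xi> i j)
    else inverse (measure (Leb (L j)) (D j)))"
  by (simp add: k_def KH_def Kh_def den_def Let_def)

lemma finI: "finite I" unfolding I_def by auto

lemma I_ne: "I \<noteq> {}" using some_in_D unfolding I_def by auto

lemma N_pos: "N > 0" using finI I_ne unfolding N_def by (simp add: card_gt_0_iff)

lemma I_D: "i \<in> I \<Longrightarrow> j \<in> J \<Longrightarrow> \<xi> i j \<in> D j"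
  unfolding I_def inD_def by auto

lemma D_sets: "j \<in> J \<Longrightarrow> D j \<in> sets (Leb (L j))"
  using D_pos measure_notin_sets by force

lemma D_fin: "j \<in> J \<Longrightarrow> emeasure (Leb (L j)) (D j) < \<infinity>"
proof (rule ccontr)
  assume j: "j \<in> J" and "\<not> emeasure (Leb (L j)) (D j) < \<infinity>"
  then have "emeasure (Leb (L j)) (D j) = \<infinity>" by (simp add: less_top[symmetric])
  then have "measure (Leb (L j)) (D j) = 0" by (simp add: measure_def)
  with D_pos[rule_format, OF j] show False by auto
qed

lemma D_meas_pos: "j \<in> J \<Longrightarrow> measure (Leb (L j)) (D j) > 0" using D_pos by auto

lemma hj: "j \<in> J \<Longrightarrow> h j > 0" using h by auto
lemma Kn: "j \<in> J \<Longrightarrow> u \<ge> 0 \<Longrightarrow> K j u \<ge> 0" using K_nonneg by auto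
lemma Kp: "j \<in> J \<Longrightarrow> u \<ge> 0 \<Longrightarrow> u < 1 \<Longrightarrow> K j u > 0" using K_pos by auto
lemma Kz: "j \<in> J \<Longrightarrow> u \<ge> 1 \<Longrightarrow> K j u = 0" using K_zero by auto
lemma Dsp: "j \<in> J \<Longrightarrow> D j \<subseteq> space (Leb (L j))" using D_space by auto
lemma Dint: "j \<in> J \<Longrightarrow> D j \<inter> space (Leb (L j)) \<in> sets (Leb (L j))"
  using D_sets Dsp by (simp add: Int_absorb2)

lemma space_M: "j \<in> J \<Longrightarrow> space (M j) = D j"
  using D_space unfolding M_def by (auto simp: space_restrict_space)

lemma M_J: "j \<in> J \<Longrightarrow> M j = restrict_space (Leb (L j)) (D j)"
  unfolding M_def by simp

lemma sets_inter: "(if j \<in> J then D j else {}) \<inter> space (Leb (L j)) \<in> sets (Leb (L j))"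
  using D_sets D_space by (auto simp: Int_absorb2)

lemma finite_M: "finite_measure (M j)"
proof (rule finite_measureI)
  show "emeasure (M j) (space (M j)) \<noteq> \<infinity>"
  proof (cases "j \<in> J")
    case True
    have "emeasure (M j) (space (M j)) = emeasure (Leb (L j)) (D j)"
      using True Dint[OF True] Dsp[OF True] unfolding M_J[OF True]
      by (simp add: emeasure_restrict_space space_restrict_space Int_absorb2)
    then show ?thesis using D_fin[OF True] by simp
  next
    case False
    then have "(if j \<in> J then D j else {}) = {}" by (rule if_not_P)
    then show ?thesis unfolding M_def by (simp add: space_restrict_space)
  qed
qed

lemma measure_M: "j \<in> J \<Longrightarrow> measure (M j) (space (M j)) = measure (Leb (L j)) (D j)"
  using D_sets D_space unfolding M_def by (simp add: measure_restrict_space space_restrict_space Int_absorb2)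

lemma meas_M: "f \<in> borel_measurable (Leb (L j)) \<Longrightarrow> f \<in> borel_measurable (M j)"
  unfolding M_def by (rule measurable_restrict_space1)

lemma int_M: fixes f :: "_ \<Rightarrow> 'b::{banach,second_countable_topology}" assumes j: "j \<in> J" shows "integral\<^sup>L (M j) f = (LINT x:D j|Leb (L j). f x)"
  unfolding M_J[OF j] set_lebesgue_integral_def using integral_restrict_space[OF Dint[OF j], of f] by simp

lemma integrable_M: fixes f :: "_ \<Rightarrow> 'b::{banach,second_countable_topology}" assumes j: "j \<in> J" shows "integrable (M j) f = set_integrable (Leb (L j)) (D j) f"
  unfolding M_J[OF j] set_integrable_def using integrable_restrict_space[OF Dint[OF j], of f] by simp

lemma enorm_meas: "(\<lambda>x. enorm L' (\<lambda>k. x k - u k)) \<in> borel_measurable (Leb L')"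
proof -
  have "(\<lambda>x. x k - u k) \<in> borel_measurable (Leb L')" if "k \<in> {..<L'}" for k
    unfolding Leb_def using that by measurable
  then have "(\<lambda>x. \<Sum>k<L'. (x k - u k)\<^sup>2) \<in> borel_measurable (Leb L')"
    by (intro borel_measurable_sum borel_measurable_power) auto
  then show ?thesis unfolding enorm_def by measurable
qed

lemma enorm_nonneg: "enorm L' v \<ge> 0" unfolding enorm_def by (simp add: sum_nonneg)

lemma enorm_sym: "enorm L' (\<lambda>k. x k - u k) = enorm L' (\<lambda>k. u k - x k)"
  unfolding enorm_def by (simp add: power2_commute)

lemma enorm_zero: "enorm L' (\<lambda>k. x k - x k) = 0"
  unfolding enorm_def by simp

lemma K_meas: assumes j: "j \<in> J" and g: "g \<in> borel_measurable M'" and g0: "\<And>x. g x \<ge> 0"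
  shows "(\<lambda>x. K j (g x)) \<in> borel_measurable M'"
proof -
  have c: "continuous_on UNIV (\<lambda>y. K j (max 0 y))"
    by (rule continuous_on_compose2[OF K_cont[rule_format, OF j]]) (auto intro!: continuous_intros)
  have "(\<lambda>x. K j (max 0 (g x))) \<in> borel_measurable M'"
    by (rule borel_measurable_continuous_on[OF c g])
  moreover have "\<And>x. max 0 (g x) = g x" using g0 by (simp add: max_def)
  ultimately show ?thesis by simp
qed

lemma K_bound: "j \<in> J \<Longrightarrow> \<exists>B. \<forall>u\<ge>0. K j u \<le> B"
proof -
  assume j: "j \<in> J"
  have "compact (K j ` {0..1})"
    by (rule compact_continuous_image) (auto intro: continuous_on_subset[OF K_cont[rule_format, OF j]])
  then obtain B where B: "\<forall>y\<in>K j ` {0..1}. norm y \<le> B"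
    using compact_imp_bounded bounded_iff by metis
  have "K j u \<le> max B 0" if "u \<ge> 0" for u
  proof (cases "u \<le> 1")
    case True then have "norm (K j u) \<le> B" using B that by auto
    then show ?thesis by auto
  next
    case False then show ?thesis using Kz[OF j, of u] by auto
  qed
  then show ?thesis by blast
qed

lemma den_nonneg: assumes j: "j \<in> J" shows "den j u \<ge> 0"
  unfolding den_def set_lebesgue_integral_def
  using Kn[OF j] hj[OF j]
  by (intro integral_nonneg_AE AE_I2) (auto simp: indicator_def enorm_nonneg less_imp_le)

lemma k_meas: assumes j: "j \<in> J" shows "k j i \<in> borel_measurable (Leb (L j))"
proof -
  have "(\<lambda>x. K j (enorm (L j) (\<lambda>k. x k - \<xi> i j k) / h j)) \<in> borel_measurable (Leb (L j))"
    using hj[OF j] by (intro K_meas[OF j] borel_measurable_divide enorm_meas) (auto simp: enorm_nonneg less_imp_le)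
  then show ?thesis
    unfolding k_eq[abs_def] by measurable
qed

lemma k_nonneg: assumes j: "j \<in> J" shows "k j i x \<ge> 0"
proof -
  have "K j (enorm (L j) (\<lambda>k. x k - \<xi> i j k) / h j) \<ge> 0"
    using Kn[OF j] hj[OF j] by (auto simp: enorm_nonneg less_imp_le)
  then show ?thesis using den_nonneg[OF j, of "\<xi> i j"] hj[OF j] D_meas_pos[OF j] unfolding k_eq by auto
qed

lemma k_bound: assumes j: "j \<in> J" shows "\<exists>B. \<forall>x. k j i x \<le> B"
proof -
  obtain B where B: "\<forall>u\<ge>0. K j u \<le> B" using K_bound j by blast
  have "k j i x \<le> max (inverse (h j ^ L j) * B / den j (\<xi> i j)) (inverse (measure (Leb (L j)) (D j)))" for x
  proof (cases "den j (\<xi> i j) \<noteq> 0")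
    case True
    then have dp: "den j (\<xi> i j) > 0" using den_nonneg[OF j, of "\<xi> i j"] by auto
    have "K j (enorm (L j) (\<lambda>k. x k - \<xi> i j k) / h j) \<le> B" using B hj[OF j] by (auto simp: enorm_nonneg less_imp_le)
    then have "inverse (h j ^ L j) * K j (enorm (L j) (\<lambda>k. x k - \<xi> i j k) / h j) / den j (\<xi> i j)
       \<le> inverse (h j ^ L j) * B / den j (\<xi> i j)"
      using dp hj[OF j] by (intro divide_right_mono mult_left_mono) auto
    then show ?thesis using True unfolding k_eq by auto
  next
    case False then show ?thesis unfolding k_eq by auto
  qed
  then show ?thesis by blast
qed

lemma k_pos: assumes j: "j \<in> J" and e: "enorm (L j) (\<lambda>k. \<xi> i j k - x k) < h j"
  shows "k j i x > 0"
proof (cases "den j (\<xi> i j) \<noteq> 0")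
  case True
  then have dp: "den j (\<xi> i j) > 0" using den_nonneg[OF j, of "\<xi> i j"] by auto
  have "enorm (L j) (\<lambda>k. x k - \<xi> i j k) / h j \<in> {0..<1}"
    using e hj[OF j] enorm_sym[of "L j" x "\<xi> i j"] by (auto simp: enorm_nonneg)
  then have "K j (enorm (L j) (\<lambda>k. x k - \<xi> i j k) / h j) > 0" using Kp[OF j] by auto
  then show ?thesis using True dp hj[OF j] unfolding k_eq by auto
next
  case False then show ?thesis using D_meas_pos[OF j] unfolding k_eq by auto
qed

lemma k_self: "j \<in> J \<Longrightarrow> k j i (\<xi> i j) > 0"
  by (rule k_pos) (auto simp: enorm_def hj)

lemma k_int: assumes j: "j \<in> J" and i: "i \<in> I" shows "integral\<^sup>L (M j) (k j i) = 1"
proof (cases "den j (\<xi> i j) \<noteq> 0")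
  case True
  have "integral\<^sup>L (M j) (k j i) = integral\<^sup>L (M j) (\<lambda>x. inverse (h j ^ L j) * K j (enorm (L j) (\<lambda>k. x k - \<xi> i j k) / h j)) / den j (\<xi> i j)"
    unfolding k_eq using True by simp
  also have "integral\<^sup>L (M j) (\<lambda>x. inverse (h j ^ L j) * K j (enorm (L j) (\<lambda>k. x k - \<xi> i j k) / h j)) = den j (\<xi> i j)"
    unfolding int_M[OF j] den_def ..
  finally show ?thesis using True by simp
next
  case False
  then have "integral\<^sup>L (M j) (k j i) = integral\<^sup>L (M j) (\<lambda>_. inverse (measure (Leb (L j)) (D j)))"
    unfolding k_eq by simp
  also have "\<dots> = 1" using measure_M[OF j] D_meas_pos[OF j] by simp
  finally show ?thesis .
qed

end


context sbf begin

definition bm :: "nat \<Rightarrow> ((nat \<Rightarrow> real) \<Rightarrow> real) \<Rightarrow> bool" where "bm j f \<longleftrightarrow> f \<in> borel_measurable (M j) \<and> (\<exists>B. \<forall>x\<in>space (M j). \<bar>f x\<bar> \<le> B)"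

lemma bm_int: "bm j f \<Longrightarrow> integrable (M j) f"
proof -
  assume "bm j f"
  then obtain B where m: "f \<in> borel_measurable (M j)" and B: "\<forall>x\<in>space (M j). \<bar>f x\<bar> \<le> B"
    unfolding bm_def by blast
  show ?thesis
    by (rule finite_measure.integrable_const_bound[OF finite_M, of _ B]) (use B m in auto)
qed

lemma bm_meas: "bm j f \<Longrightarrow> f \<in> borel_measurable (M j)" unfolding bm_def by auto

lemma bm_const[simp, intro]: "bm j (\<lambda>_. c)" unfolding bm_def by (auto intro!: exI[of _ "\<bar>c\<bar>"])

lemma bm_add[intro]: "bm j f \<Longrightarrow> bm j g \<Longrightarrow> bm j (\<lambda>x. f x + g x)"
  unfolding bm_def
proof (safe, goal_cases)
  case (1 B1 B2) then show ?case by (intro borel_measurable_add)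
next
  case (2 B1 B2) then show ?case by (intro exI[of _ "B1 + B2"]) (auto intro: abs_triangle_ineq[THEN order_trans] add_mono)
qed

lemma bm_mult[intro]: "bm j f \<Longrightarrow> bm j g \<Longrightarrow> bm j (\<lambda>x. f x * g x)"
  unfolding bm_def
proof (safe, goal_cases)
  case (1 B1 B2) then show ?case by (intro borel_measurable_times)
next
  case (2 B1 B2)
  have "\<bar>f x * g x\<bar> \<le> B1 * B2" if "x \<in> space (M j)" for x
    using 2 that by (auto simp: abs_mult intro!: mult_mono)
  then show ?case by blast
qed

lemma bm_sum[intro]: "finite A \<Longrightarrow> (\<And>a. a \<in> A \<Longrightarrow> bm j (f a)) \<Longrightarrow> bm j (\<lambda>x. \<Sum>a\<in>A. f a x)"
  by (induction A rule: finite_induct) auto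

lemma bm_prod[intro]: "finite A \<Longrightarrow> (\<And>a. a \<in> A \<Longrightarrow> bm j (f a)) \<Longrightarrow> bm j (\<lambda>x. \<Prod>a\<in>A. f a x)"
  by (induction A rule: finite_induct) auto

lemma bm_k[intro]: "j \<in> J \<Longrightarrow> bm j (k j i)"
proof -
  assume j: "j \<in> J"
  obtain B where "\<forall>x. k j i x \<le> B" using k_bound[OF j] by blast
  then have "\<forall>x\<in>space (M j). \<bar>k j i x\<bar> \<le> B" using k_nonneg[OF j] by auto
  then show ?thesis unfolding bm_def using meas_M[OF k_meas[OF j]] by blast
qed

lemma S_pos: assumes j: "j \<in> J" and x: "x \<in> D j" shows "S j x > 0"
proof -
  obtain i where i: "i \<in> {1..n}" "inD d D \<xi> i" "enorm (L j) (\<lambda>k. \<xi> i j k - x k) < h j"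
    using condA j x by blast
  then have iI: "i \<in> I" unfolding I_def by auto
  have "k j i x > 0" by (rule k_pos[OF j i(3)])
  moreover have "k j i x \<le> S j x"
    unfolding S_def using iI finI k_nonneg[OF j] by (intro member_le_sum) auto
  ultimately show ?thesis by auto
qed

lemma S_nonneg: "j \<in> J \<Longrightarrow> S j x \<ge> 0" unfolding S_def using k_nonneg by (simp add: sum_nonneg)

lemma k_le_S: "j \<in> J \<Longrightarrow> i \<in> I \<Longrightarrow> k j i x \<le> S j x"
  unfolding S_def using finI k_nonneg by (intro member_le_sum) auto

lemma w_nonneg: "j \<in> J \<Longrightarrow> w j i x \<ge> 0" unfolding w_def using k_nonneg S_nonneg by simp

lemma w_le1: "j \<in> J \<Longrightarrow> i \<in> I \<Longrightarrow> w j i x \<le> 1"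
proof -
  assume j: "j \<in> J" and i: "i \<in> I"
  show ?thesis
  proof (cases "S j x = 0")
    case True then show ?thesis unfolding w_def by simp
  next
    case False
    then have "S j x > 0" using S_nonneg[OF j, of x] by simp
    then show ?thesis unfolding w_def using k_le_S[OF j i, of x] by simp
  qed
qed

lemma sum_w: "j \<in> J \<Longrightarrow> x \<in> D j \<Longrightarrow> (\<Sum>i\<in>I. w j i x) = 1"
  unfolding w_def using S_pos[of j x] by (simp add: sum_divide_distrib[symmetric] S_def[symmetric])

lemma S_w: "j \<in> J \<Longrightarrow> x \<in> D j \<Longrightarrow> S j x * w j i x = k j i x"
  unfolding w_def using S_pos[of j x] by simp

lemma bm_S[intro]: "j \<in> J \<Longrightarrow> bm j (S j)"
  unfolding S_def[abs_def] by (intro bm_sum finI bm_k)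

lemma bm_w[intro]: assumes j: "j \<in> J" and i: "i \<in> I" shows "bm j (w j i)"
proof -
  have m: "w j i \<in> borel_measurable (M j)"
    unfolding w_def[abs_def] using bm_meas[OF bm_k[OF j]] bm_meas[OF bm_S[OF j]] by measurable
  have "\<forall>x\<in>space (M j). \<bar>w j i x\<bar> \<le> 1"
    using w_nonneg[OF j] w_le1[OF j i] by auto
  then show ?thesis unfolding bm_def using m by blast
qed

lemma Mc_sym: "Mc j i l = Mc j l i" unfolding Mc_def by (simp add: mult.commute)

lemma Mc_w: "Mc j i l = (\<integral>x. k j i x * w j l x \<partial>M j)" unfolding Mc_def w_def by simp

lemma int_sum_bm: fixes f :: "'c \<Rightarrow> (nat \<Rightarrow> real) \<Rightarrow> real" shows "finite A \<Longrightarrow> (\<And>a. a \<in> A \<Longrightarrow> bm j (f a)) \<Longrightarrow>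
    (\<integral>x. (\<Sum>a\<in>A. f a x) \<partial>M j) = (\<Sum>a\<in>A. integral\<^sup>L (M j) (f a))"
  by (rule Bochner_Integration.integral_sum) (auto intro: bm_int)

lemma int_cong_D: fixes f g :: "(nat \<Rightarrow> real) \<Rightarrow> 'b::{banach,second_countable_topology}" shows "j \<in> J \<Longrightarrow> (\<And>x. x \<in> D j \<Longrightarrow> f x = g x) \<Longrightarrow> integral\<^sup>L (M j) f = integral\<^sup>L (M j) g"
  by (rule Bochner_Integration.integral_cong) (auto simp: space_M)

lemma Mc_row: assumes j: "j \<in> J" and i: "i \<in> I" shows "(\<Sum>l\<in>I. Mc j i l) = 1"
proof -
  have "(\<Sum>l\<in>I. Mc j i l) = (\<integral>x. (\<Sum>l\<in>I. k j i x * w j l x) \<partial>M j)"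
    unfolding Mc_w using j by (intro int_sum_bm[symmetric] finI bm_mult bm_k bm_w) auto
  also have "\<dots> = integral\<^sup>L (M j) (k j i)"
    using j by (intro int_cong_D) (auto simp: sum_distrib_left[symmetric] sum_w)
  finally show ?thesis using k_int[OF j i] by simp
qed

lemma Mc_col: assumes j: "j \<in> J" and i: "i \<in> I" shows "(\<Sum>l\<in>I. Mc j l i) = 1"
  using Mc_row[OF j i] by (simp add: Mc_sym)

lemma Q_sum: assumes j: "j \<in> J" and i: "i \<in> I" and l: "l \<in> I"
  shows "(\<Sum>r\<in>I. Q j r i l) = Mc j i l"
proof -
  have "(\<Sum>r\<in>I. Q j r i l) = (\<integral>x. (\<Sum>r\<in>I. k j r x * w j i x * w j l x) \<partial>M j)"
    unfolding Q_def using j i l by (intro int_sum_bm[symmetric] finI bm_mult bm_k bm_w) auto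
  also have "\<dots> = (\<integral>x. k j i x * w j l x \<partial>M j)"
    using j by (intro int_cong_D) (auto simp: sum_distrib_right[symmetric] S_def[symmetric] S_w)
  finally show ?thesis unfolding Mc_w .
qed

lemma int_Sw: assumes j: "j \<in> J" and i: "i \<in> I"
  shows "(\<integral>x. S j x / N * w j i x \<partial>M j) = 1 / N"
proof -
  have "(\<integral>x. S j x / N * w j i x \<partial>M j) = (\<integral>x. k j i x / N \<partial>M j)"
    using j by (intro int_cong_D) (auto simp: S_w[symmetric])
  also have "\<dots> = 1 / N" using k_int[OF j i] by simp
  finally show ?thesis .
qed

lemma int_S: assumes j: "j \<in> J" shows "(\<integral>x. S j x / N \<partial>M j) = 1"
proof -
  have "(\<integral>x. S j x / N \<partial>M j) = (\<integral>x. (\<Sum>i\<in>I. k j i x / N) \<partial>M j)"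
    unfolding S_def by (simp add: sum_divide_distrib)
  also have "\<dots> = (\<Sum>i\<in>I. integral\<^sup>L (M j) (k j i) / N)"
    using j by (subst int_sum_bm) (auto intro!: finI bm_mult bm_k simp: divide_inverse)
  also have "\<dots> = 1" using k_int[OF j] N_pos finI I_ne by (simp add: N_def)
  finally show ?thesis .
qed

lemma sumI_gen: fixes g :: "nat \<Rightarrow> 'a::comm_monoid_add" shows "(\<Sum>i\<in>{1..n}. if inD d D \<xi> i then g i else 0) = (\<Sum>i\<in>I. g i)"
  unfolding I_def by (rule sum.inter_filter[symmetric]) simp

lemma sumI: fixes g :: "nat \<Rightarrow> real" shows "(\<Sum>i\<in>{1..n}. g i * of_bool (inD d D \<xi> i)) = (\<Sum>i\<in>I. g i)"
  unfolding sumI_gen[symmetric] by (intro sum.cong) auto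

lemma sumI_R: fixes g :: "nat \<Rightarrow> real" shows "(\<Sum>i\<in>{1..n}. (g i * of_bool (inD d D \<xi> i)) *\<^sub>R (Z i :: 'a::real_vector)) = (\<Sum>i\<in>I. g i *\<^sub>R Z i)"
  unfolding sumI_gen[symmetric] by (intro sum.cong) auto

lemma sumI_R': "(\<Sum>i\<in>{1..n}. of_bool (inD d D \<xi> i) *\<^sub>R (Z i :: 'a::real_vector)) = (\<Sum>i\<in>I. Z i)"
  unfolding sumI_gen[symmetric] by (intro sum.cong) auto

lemma p0N: "p0 d D n \<xi> * real n = N"
proof -
  have "n > 0" using some_in_D by auto
  moreover have "(\<Sum>i\<in>{1..n}. of_bool (inD d D \<xi> i) :: real) = N"
    unfolding N_def I_def by (simp add: Int_def Collect_conj_eq[symmetric] conj_commute)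
  ultimately show ?thesis unfolding p0_def by simp
qed

lemma pj_eq: "pj d L D h K n \<xi> j x = S j x / N"
  unfolding pj_def p0N S_def KH_def[symmetric] k_def[symmetric] sumI
  by (simp add: divide_inverse mult.commute)

lemma pjk_ratio: "pjk d L D h K n \<xi> j m x t / pj d L D h K n \<xi> j x = (\<Sum>i\<in>I. w j i x * k m i t)"
proof -
  have "pjk d L D h K n \<xi> j m x t = (\<Sum>i\<in>I. k j i x * k m i t) / N"
    unfolding pjk_def p0N k_def[symmetric] sumI by (simp add: divide_inverse mult.commute)
  then have "pjk d L D h K n \<xi> j m x t / pj d L D h K n \<xi> j x = (\<Sum>i\<in>I. k j i x * k m i t) / S j x"
    unfolding pj_eq using N_pos by simp
  also have "\<dots> = (\<Sum>i\<in>I. w j i x * k m i t)"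
    unfolding w_def sum_divide_distrib by simp
  finally show ?thesis .
qed

lemma mj_eq: "mj d L D h K n \<xi> Y j x = (\<Sum>i\<in>I. w j i x *\<^sub>R Y i)"
proof -
  have "pj d L D h K n \<xi> j x * p0 d D n \<xi> * real n = S j x"
    unfolding mult.assoc p0N pj_eq using N_pos by simp
  then show ?thesis unfolding mj_def k_def[symmetric] sumI_R w_def
    by (simp add: scaleR_sum_right divide_inverse mult.commute)
qed

lemma f0_eq: "f0 d D n \<xi> Y = inverse N *\<^sub>R (\<Sum>i\<in>I. Y i)"
  unfolding f0_def p0N sumI_R' ..

lemma pD_eq: "pD d L D h K n \<xi> x = (\<Sum>i\<in>I. \<Prod>j\<in>J. k j i (x j)) / N"
  unfolding pD_def p0N k_def[symmetric] sumI by (simp add: divide_inverse mult.commute)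

end


definition qf :: "('a \<Rightarrow> 'a \<Rightarrow> real) \<Rightarrow> 'a set \<Rightarrow> ('a \<Rightarrow> real) \<Rightarrow> real" where
  "qf b S v = (\<Sum>s\<in>S. \<Sum>t\<in>S. v s * b s t * v t)"

lemma qf_insert_gen:
  assumes S: "finite S" "a \<notin> S" and sym: "\<And>s t. b s t = b t s"
    and va: "v' a = x" and vS: "\<And>s. s \<in> S \<Longrightarrow> v' s = v s"
  shows "qf b (insert a S) v' = x * x * b a a + 2 * x * (\<Sum>t\<in>S. b a t * v t) + qf b S v"
proof -
  have "qf b (insert a S) v' =
      (\<Sum>t\<in>insert a S. v' a * b a t * v' t) + (\<Sum>s\<in>S. \<Sum>t\<in>insert a S. v' s * b s t * v' t)"
    unfolding qf_def by (simp only: sum.insert[OF S])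
  also have "(\<Sum>t\<in>insert a S. v' a * b a t * v' t) = x * b a a * x + (\<Sum>t\<in>S. x * b a t * v t)"
    by (simp only: sum.insert[OF S] va) (simp add: vS)
  also have "(\<Sum>s\<in>S. \<Sum>t\<in>insert a S. v' s * b s t * v' t) =
      (\<Sum>s\<in>S. v s * b s a * x + (\<Sum>t\<in>S. v s * b s t * v t))"
    by (intro sum.cong) (simp_all only: sum.insert[OF S] va vS, auto simp: vS)
  also have "\<dots> = (\<Sum>s\<in>S. x * b a s * v s) + qf b S v"
    unfolding qf_def sum.distrib by (simp add: sym mult_ac)
  finally show ?thesis
    by (simp add: sum_distrib_left[symmetric] mult_ac algebra_simps)
qed

lemma qf_insert:
  assumes S: "finite S" "a \<notin> S" and sym: "\<And>s t. b s t = b t s"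
  shows "qf b (insert a S) (v(a := x)) = x * x * b a a + 2 * x * (\<Sum>t\<in>S. b a t * v t) + qf b S v"
  by (rule qf_insert_gen[OF S sym]) (use S in auto)

lemma qf_zero: "qf b S (\<lambda>_. 0) = 0" unfolding qf_def by simp

lemma qf_unit:
  assumes "finite S" "t \<in> S" shows "qf b S (\<lambda>s. if s = t then 1 else 0) = b t t"
proof -
  have "(\<Sum>t'\<in>S. (if s = t then 1 else 0) * b s t' * (if t' = t then 1 else 0)) = (if s = t then b s t else 0)" for s
  proof -
    have "(\<Sum>t'\<in>S. (if s = t then 1 else 0) * b s t' * (if t' = t then 1 else 0)) =
        (\<Sum>t'\<in>S. if t' = t then (if s = t then 1 else 0) * b s t' else 0)"
      by (intro sum.cong) auto
    also have "\<dots> = (if s = t then b s t else 0)" using assms by (simp add: sum.delta)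
    finally show ?thesis .
  qed
  then show ?thesis unfolding qf_def using assms by (simp add: sum.delta)
qed

lemma psd_solve:
  fixes b :: "'a \<Rightarrow> 'a \<Rightarrow> real" and c :: "'a \<Rightarrow> 'h::real_vector"
  assumes "finite S" and "\<And>s t. b s t = b t s" and "\<And>v. qf b S v \<ge> 0"
    and "\<And>v. qf b S v = 0 \<Longrightarrow> (\<Sum>s\<in>S. v s *\<^sub>R c s) = 0"
  shows "\<exists>u. \<forall>t\<in>S. (\<Sum>s\<in>S. b s t *\<^sub>R u s) = c t"
  using assms
proof (induction S arbitrary: b c rule: finite_induct)
  case empty then show ?case by auto
next
  case (insert a S b c)
  note S = insert(1,2) and sym = insert(4) and psd = insert(5) and ker = insert(6)
  have baa: "b a a = qf b (insert a S) ((\<lambda>_. 0)(a := 1))"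
    using qf_insert[OF S sym, where v="\<lambda>_. 0" and x=1] by (simp add: qf_zero)
  show ?case
  proof (cases "b a a = 0")
    case True
    have row: "b a t = 0" if t: "t \<in> S" for t
    proof (rule ccontr)
      assume ne: "b a t \<noteq> 0"
      define v where "v = (\<lambda>s. if s = t then 1 else (0::real))"
      define x where "x = - (b t t + 1) / (2 * b a t)"
      have "qf b (insert a S) (v(a := x)) = 2 * x * b a t + b t t"
        using qf_insert[OF S sym, where v=v and x=x] True qf_unit[OF S(1) t, of b] t S(1)
        by (simp add: v_def if_distrib cong: if_cong)
      also have "\<dots> = -1" using ne unfolding x_def by (simp add: field_simps)
      finally show False using psd[of "v(a := x)"] by simp
    qed
    have ca: "c a = 0"
    proof -
      have "qf b (insert a S) ((\<lambda>_. 0)(a := 1)) = 0" using baa True by simp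
      from ker[OF this] have "c a + (\<Sum>x\<in>S. ((\<lambda>_. 0)(a := 1)) x *\<^sub>R c x) = 0"
        using S by simp
      moreover have "(\<Sum>x\<in>S. ((\<lambda>_. 0)(a := 1)) x *\<^sub>R c x) = 0"
        using S by (intro sum.neutral) auto
      ultimately show ?thesis by simp
    qed
    have "\<exists>u. \<forall>t\<in>S. (\<Sum>s\<in>S. b s t *\<^sub>R u s) = c t"
    proof (rule insert.IH[OF sym])
      fix v
      have e: "qf b (insert a S) (v(a := 0)) = qf b S v" using qf_insert[OF S sym, where v=v and x=0] by simp
      show "qf b S v \<ge> 0" using psd[of "v(a := 0)"] unfolding e .
      assume q0: "qf b S v = 0"
      have "qf b (insert a S) (v(a := 0)) = 0" unfolding e by (rule q0)
      from ker[OF this] have "(\<Sum>s\<in>insert a S. (v(a := 0)) s *\<^sub>R c s) = 0" .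
      moreover have "(\<Sum>s\<in>S. (v(a := 0)) s *\<^sub>R c s) = (\<Sum>s\<in>S. v s *\<^sub>R c s)"
        using S by (intro sum.cong) auto
      ultimately show "(\<Sum>s\<in>S. v s *\<^sub>R c s) = 0" using S by simp
    qed
    then obtain u where u: "\<forall>t\<in>S. (\<Sum>s\<in>S. b s t *\<^sub>R u s) = c t" by blast
    show ?thesis
    proof (intro exI[of _ "u(a := 0)"] ballI)
      fix t assume t: "t \<in> insert a S"
      have "(\<Sum>s\<in>S. b s t *\<^sub>R (u(a := 0)) s) = (\<Sum>s\<in>S. b s t *\<^sub>R u s)"
        using S by (intro sum.cong) auto
      then have "(\<Sum>s\<in>insert a S. b s t *\<^sub>R (u(a := 0)) s) = (\<Sum>s\<in>S. b s t *\<^sub>R u s)"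
        using S by simp
      also have "\<dots> = c t"
      proof (cases "t = a")
        case True
        have "(\<Sum>s\<in>S. b s t *\<^sub>R u s) = 0" using row True sym by (simp add: sum.neutral)
        then show ?thesis using ca True by simp
      next
        case False then show ?thesis using u t by auto
      qed
      finally show "(\<Sum>s\<in>insert a S. b s t *\<^sub>R (u(a := 0)) s) = c t" .
    qed
  next
    case False
    define b' where "b' s t = b s t - b s a * b a t / b a a" for s t
    define c' where "c' t = c t - (b a t / b a a) *\<^sub>R c a" for t
    have sym': "b' s t = b' t s" for s t unfolding b'_def using sym by (simp add: mult.commute)
    have qf': "qf b' S v = qf b (insert a S) (v(a := - (\<Sum>t\<in>S. b a t * v t) / b a a))" for v
    proof -
      define \<beta> where "\<beta> = (\<Sum>t\<in>S. b a t * v t)"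
      have "qf b' S v = qf b S v - (\<Sum>s\<in>S. \<Sum>t\<in>S. v s * (b s a * b a t / b a a) * v t)"
        unfolding qf_def b'_def by (simp add: sum_subtractf algebra_simps)
      also have "(\<Sum>s\<in>S. \<Sum>t\<in>S. v s * (b s a * b a t / b a a) * v t) = \<beta> * \<beta> / b a a"
        unfolding \<beta>_def sum_product sum_divide_distrib using sym by (simp add: mult_ac)
      finally have "qf b' S v = qf b S v - \<beta> * \<beta> / b a a" .
      moreover have "qf b (insert a S) (v(a := - \<beta> / b a a)) = qf b S v - \<beta> * \<beta> / b a a"
        unfolding qf_insert[OF S sym] \<beta>_def[symmetric] using False by (simp add: field_simps)
      ultimately show ?thesis unfolding \<beta>_def by simp
    qed
    have "\<exists>u. \<forall>t\<in>S. (\<Sum>s\<in>S. b' s t *\<^sub>R u s) = c' t"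
    proof (rule insert.IH[OF sym'])
      fix v
      show "qf b' S v \<ge> 0" unfolding qf' by (rule psd)
      assume "qf b' S v = 0"
      then have "qf b (insert a S) (v(a := - (\<Sum>t\<in>S. b a t * v t) / b a a)) = 0" using qf' by simp
      from ker[OF this]
      have "(\<Sum>s\<in>insert a S. (v(a := - (\<Sum>t\<in>S. b a t * v t) / b a a)) s *\<^sub>R c s) = 0" .
      moreover have "(\<Sum>s\<in>S. (v(a := - (\<Sum>t\<in>S. b a t * v t) / b a a)) s *\<^sub>R c s) = (\<Sum>s\<in>S. v s *\<^sub>R c s)"
        using S by (intro sum.cong) auto
      ultimately
      have "(- (\<Sum>t\<in>S. b a t * v t) / b a a) *\<^sub>R c a + (\<Sum>s\<in>S. v s *\<^sub>R c s) = 0"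
        using S by simp
      moreover have "(\<Sum>s\<in>S. v s *\<^sub>R c' s) = (\<Sum>s\<in>S. v s *\<^sub>R c s) - ((\<Sum>t\<in>S. b a t * v t) / b a a) *\<^sub>R c a"
        unfolding c'_def by (simp add: scaleR_diff_right sum_subtractf scaleR_sum_left[symmetric]
            sum_divide_distrib mult_ac)
      ultimately show "(\<Sum>s\<in>S. v s *\<^sub>R c' s) = 0"
        by (simp add: algebra_simps)
    qed
    then obtain u where u: "\<forall>t\<in>S. (\<Sum>s\<in>S. b' s t *\<^sub>R u s) = c' t" by blast
    define ua where "ua = (1 / b a a) *\<^sub>R (c a - (\<Sum>s\<in>S. b s a *\<^sub>R u s))"
    show ?thesis
    proof (intro exI[of _ "u(a := ua)"] ballI)
      fix t assume t: "t \<in> insert a S"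
      have "(\<Sum>s\<in>S. b s t *\<^sub>R (u(a := ua)) s) = (\<Sum>s\<in>S. b s t *\<^sub>R u s)"
        using S by (intro sum.cong) auto
      then have e: "(\<Sum>s\<in>insert a S. b s t *\<^sub>R (u(a := ua)) s) = b a t *\<^sub>R ua + (\<Sum>s\<in>S. b s t *\<^sub>R u s)"
        using S by simp
      show "(\<Sum>s\<in>insert a S. b s t *\<^sub>R (u(a := ua)) s) = c t"
      proof (cases "t = a")
        case True
        have "b a a *\<^sub>R ua = c a - (\<Sum>s\<in>S. b s a *\<^sub>R u s)"
          unfolding ua_def using False by simp
        then show ?thesis unfolding e using True by simp
      next
        case ta: False
        then have tS: "t \<in> S" using t by auto
        have "(\<Sum>s\<in>S. b' s t *\<^sub>R u s) = (\<Sum>s\<in>S. b s t *\<^sub>R u s) - (b a t / b a a) *\<^sub>R (\<Sum>s\<in>S. b s a *\<^sub>R u s)"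
          unfolding b'_def by (simp add: scaleR_diff_left sum_subtractf scaleR_sum_right mult_ac)
        then have "(\<Sum>s\<in>S. b s t *\<^sub>R u s) = c t - (b a t / b a a) *\<^sub>R c a + (b a t / b a a) *\<^sub>R (\<Sum>s\<in>S. b s a *\<^sub>R u s)"
          using u tS unfolding c'_def by (simp add: algebra_simps)
        moreover have "b a t *\<^sub>R ua = (b a t / b a a) *\<^sub>R c a - (b a t / b a a) *\<^sub>R (\<Sum>s\<in>S. b s a *\<^sub>R u s)"
          unfolding ua_def by (simp add: scaleR_diff_right)
        ultimately show ?thesis unfolding e by simp
      qed
    qed
  qed
qed



context sbf begin

definition "f0v (Y :: nat \<Rightarrow> 'h::real_vector) = inverse N *\<^sub>R (\<Sum>i\<in>I. Y i)"
definition "Yt Y r = Y r - f0v Y"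
definition "acoef i m (\<beta> :: nat \<Rightarrow> nat \<Rightarrow> 'h::real_vector) = (\<Sum>l\<in>I. Mc m i l *\<^sub>R \<beta> l m)"
definition "bq s t = (\<Sum>r\<in>I. (if snd s = snd t then Q (snd s) r (fst s) (fst t)
      else Mc (snd s) r (fst s) * Mc (snd t) r (fst t))) / N"
definition "cq Y s = inverse N *\<^sub>R (\<Sum>r\<in>I. Mc (snd s) r (fst s) *\<^sub>R Yt Y r)"
definition "Pm r s = Mc (snd s) r (fst s)"
definition "Aq r v = (\<Sum>s\<in>I \<times> J. v s * Pm r s)"
definition "Var r j u = (\<Sum>i\<in>I. \<Sum>l\<in>I. u i * u l * (Q j r i l - Mc j r i * Mc j r l))"

lemma Q_sym: "Q j r i l = Q j r l i" unfolding Q_def by (simp add: mult_ac)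

lemma bq_sym: "bq s t = bq t s" unfolding bq_def
  by (intro arg_cong[where f="\<lambda>x. x / N"] sum.cong refl) (auto simp: mult.commute intro: Q_sym)

lemma Var_nonneg: assumes j: "j \<in> J" and r: "r \<in> I" shows "Var r j u \<ge> 0"
proof -
  define G where "G x = (\<Sum>i\<in>I. u i * w j i x)" for x
  define a where "a = (\<Sum>i\<in>I. u i * Mc j r i)"
  have bG: "bm j G" unfolding G_def[abs_def] using j by (intro bm_sum finI bm_mult bm_w) auto
  have bk: "bm j (k j r)" using j by auto
  have kGG: "(\<integral>x. k j r x * G x * G x \<partial>M j) = (\<Sum>i\<in>I. \<Sum>l\<in>I. u i * u l * Q j r i l)"
  proof -
    have "(\<integral>x. k j r x * G x * G x \<partial>M j) = (\<integral>x. (\<Sum>i\<in>I. \<Sum>l\<in>I. u i * u l * (k j r x * w j i x * w j l x)) \<partial>M j)"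
      unfolding G_def by (simp add: sum_distrib_left sum_distrib_right mult_ac)
    also have "\<dots> = (\<Sum>i\<in>I. \<Sum>l\<in>I. u i * u l * Q j r i l)"
      unfolding Q_def using j
      by (subst int_sum_bm, (auto intro!: finI bm_mult bm_sum bm_k bm_w)[2],
          intro sum.cong refl, subst int_sum_bm, (auto intro!: finI bm_mult bm_sum bm_k bm_w)[2]) simp
    finally show ?thesis .
  qed
  have kG: "(\<integral>x. k j r x * G x \<partial>M j) = a"
  proof -
    have "(\<integral>x. k j r x * G x \<partial>M j) = (\<integral>x. (\<Sum>i\<in>I. u i * (k j r x * w j i x)) \<partial>M j)"
      unfolding G_def by (simp add: sum_distrib_left mult_ac)
    also have "\<dots> = a"
      unfolding a_def Mc_w using j
      by (subst int_sum_bm, (auto intro!: finI bm_mult bm_sum bm_k bm_w)[2]) simp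
    finally show ?thesis .
  qed
  have "0 \<le> (\<integral>x. k j r x * (G x - a)\<^sup>2 \<partial>M j)"
    using k_nonneg[OF j] by (intro integral_nonneg_AE AE_I2) simp
  also have "(\<integral>x. k j r x * (G x - a)\<^sup>2 \<partial>M j) =
      (\<integral>x. k j r x * G x * G x - 2 * a * (k j r x * G x) + a * a * k j r x \<partial>M j)"
    by (simp add: power2_eq_square algebra_simps)
  also have "\<dots> = (\<integral>x. k j r x * G x * G x \<partial>M j) - 2 * a * (\<integral>x. k j r x * G x \<partial>M j) + a * a * integral\<^sup>L (M j) (k j r)"
    using bG bk by (simp add: bm_int bm_mult)
  also have "\<dots> = (\<Sum>i\<in>I. \<Sum>l\<in>I. u i * u l * Q j r i l) - a * a"
    unfolding kGG kG k_int[OF j r] by simp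
  also have "\<dots> = Var r j u"
    unfolding Var_def a_def by (simp add: algebra_simps sum_subtractf sum_distrib_left sum_distrib_right)
  finally show ?thesis .
qed

lemma sum_IJ: "(\<Sum>s\<in>I \<times> J. F s) = (\<Sum>j\<in>J. \<Sum>i\<in>I. F (i, j))"
proof -
  have "(\<Sum>i\<in>I. \<Sum>j\<in>J. F (i, j)) = (\<Sum>(i, j)\<in>I \<times> J. F (i, j))" by (rule sum.cartesian_product)
  then have "(\<Sum>s\<in>I \<times> J. F s) = (\<Sum>i\<in>I. \<Sum>j\<in>J. F (i, j))" by (simp add: case_prod_beta')
  then show ?thesis by (simp add: sum.swap[of _ I])
qed

lemma qf_bq: "qf bq (I \<times> J) v = (\<Sum>r\<in>I. (\<Sum>j\<in>J. Var r j (\<lambda>i. v (i, j))) + (Aq r v)\<^sup>2) / N"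
proof -
  define R where "R r j i l = Q j r i l - Mc j r i * Mc j r l" for r j i l
  define Z where "Z r s t = (if snd s = snd t then R r (snd s) (fst s) (fst t) else 0) + Pm r s * Pm r t" for r s t
  have bqZ: "bq s t = (\<Sum>r\<in>I. Z r s t) / N" for s t
    unfolding bq_def Z_def R_def Pm_def by (intro arg_cong[where f="\<lambda>x. x / N"] sum.cong refl) auto
  have "qf bq (I \<times> J) v = (\<Sum>s\<in>I \<times> J. \<Sum>t\<in>I \<times> J. \<Sum>r\<in>I. v s * Z r s t * v t / N)"
    unfolding qf_def bqZ by (simp add: sum_distrib_left sum_distrib_right sum_divide_distrib mult_ac)
  also have "\<dots> = (\<Sum>r\<in>I. \<Sum>s\<in>I \<times> J. \<Sum>t\<in>I \<times> J. v s * Z r s t * v t) / N"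
    by (simp add: sum_divide_distrib sum.swap[of _ I])
  also have "\<dots> = (\<Sum>r\<in>I. (\<Sum>j\<in>J. Var r j (\<lambda>i. v (i, j))) + (Aq r v)\<^sup>2) / N"
  proof (intro arg_cong[where f="\<lambda>x. x / N"] sum.cong refl)
    fix r assume r: "r \<in> I"
    have "(\<Sum>s\<in>I \<times> J. \<Sum>t\<in>I \<times> J. v s * Z r s t * v t) =
        (\<Sum>s\<in>I \<times> J. \<Sum>t\<in>I \<times> J. v s * (if snd s = snd t then R r (snd s) (fst s) (fst t) else 0) * v t) +
        (\<Sum>s\<in>I \<times> J. \<Sum>t\<in>I \<times> J. v s * Pm r s * (v t * Pm r t))"
      unfolding Z_def by (simp add: algebra_simps sum.distrib)
    also have "(\<Sum>s\<in>I \<times> J. \<Sum>t\<in>I \<times> J. v s * Pm r s * (v t * Pm r t)) = (Aq r v)\<^sup>2"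
      unfolding Aq_def power2_eq_square sum_product ..
    also have "(\<Sum>s\<in>I \<times> J. \<Sum>t\<in>I \<times> J. v s * (if snd s = snd t then R r (snd s) (fst s) (fst t) else 0) * v t) =
        (\<Sum>s\<in>I \<times> J. \<Sum>l\<in>I. v s * R r (snd s) (fst s) l * v (l, snd s))"
    proof (intro sum.cong refl)
      fix s assume s: "s \<in> I \<times> J"
      have "(\<Sum>t\<in>I \<times> J. v s * (if snd s = snd t then R r (snd s) (fst s) (fst t) else 0) * v t) =
          (\<Sum>l\<in>I. \<Sum>m\<in>J. if m = snd s then v s * R r (snd s) (fst s) l * v (l, m) else 0)"
        unfolding sum.cartesian_product by (intro sum.cong refl) auto
      also have "\<dots> = (\<Sum>l\<in>I. v s * R r (snd s) (fst s) l * v (l, snd s))"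
        using s by (intro sum.cong refl) (auto simp: sum.delta)
      finally show "(\<Sum>t\<in>I \<times> J. v s * (if snd s = snd t then R r (snd s) (fst s) (fst t) else 0) * v t) =
          (\<Sum>l\<in>I. v s * R r (snd s) (fst s) l * v (l, snd s))" .
    qed
    also have "\<dots> = (\<Sum>j\<in>J. Var r j (\<lambda>i. v (i, j)))"
      unfolding sum_IJ Var_def R_def by (simp add: mult_ac)
    finally show "(\<Sum>s\<in>I \<times> J. \<Sum>t\<in>I \<times> J. v s * Z r s t * v t) = (\<Sum>j\<in>J. Var r j (\<lambda>i. v (i, j))) + (Aq r v)\<^sup>2" .
  qed
  finally show ?thesis .
qed

lemma qf_bq_nonneg: "qf bq (I \<times> J) v \<ge> 0"
  unfolding qf_bq using N_pos Var_nonneg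
  by (intro divide_nonneg_pos sum_nonneg add_nonneg_nonneg) auto

lemma qf_bq_zero: assumes "qf bq (I \<times> J) v = 0" and r: "r \<in> I" shows "Aq r v = 0"
proof -
  have "(\<Sum>r\<in>I. (\<Sum>j\<in>J. Var r j (\<lambda>i. v (i, j))) + (Aq r v)\<^sup>2) = 0"
    using assms(1) N_pos unfolding qf_bq by simp
  then have "\<forall>r\<in>I. (\<Sum>j\<in>J. Var r j (\<lambda>i. v (i, j))) + (Aq r v)\<^sup>2 = 0"
    using Var_nonneg finI by (subst sum_nonneg_eq_0_iff[symmetric]) (auto intro!: add_nonneg_nonneg sum_nonneg)
  then have "(\<Sum>j\<in>J. Var r j (\<lambda>i. v (i, j))) + (Aq r v)\<^sup>2 = 0" using r by auto
  moreover have "(\<Sum>j\<in>J. Var r j (\<lambda>i. v (i, j))) \<ge> 0" using Var_nonneg r by (intro sum_nonneg) auto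
  ultimately have "(Aq r v)\<^sup>2 = 0" using zero_le_power2[of "Aq r v"] by linarith
  then show ?thesis by simp
qed

lemma ell: "(\<Sum>s\<in>I \<times> J. v s *\<^sub>R cq Y s) = inverse N *\<^sub>R (\<Sum>r\<in>I. Aq r v *\<^sub>R Yt Y r)"
proof -
  have "(\<Sum>s\<in>I \<times> J. v s *\<^sub>R cq Y s) = (\<Sum>s\<in>I \<times> J. \<Sum>r\<in>I. (inverse N * (v s * Pm r s)) *\<^sub>R Yt Y r)"
    unfolding cq_def Pm_def by (simp add: scaleR_sum_right mult_ac)
  also have "\<dots> = (\<Sum>r\<in>I. \<Sum>s\<in>I \<times> J. (inverse N * (v s * Pm r s)) *\<^sub>R Yt Y r)"
    by (rule sum.swap)
  also have "\<dots> = inverse N *\<^sub>R (\<Sum>r\<in>I. Aq r v *\<^sub>R Yt Y r)"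
    unfolding Aq_def by (simp add: scaleR_sum_right scaleR_sum_left)
  finally show ?thesis .
qed

lemma sol_u: "\<exists>u. \<forall>t\<in>I \<times> J. (\<Sum>s\<in>I \<times> J. bq s t *\<^sub>R u s) = cq Y t"
proof (rule psd_solve)
  show "finite (I \<times> J)" using finI by simp
  show "bq s t = bq t s" for s t by (rule bq_sym)
  show "qf bq (I \<times> J) v \<ge> 0" for v by (rule qf_bq_nonneg)
  fix v assume "qf bq (I \<times> J) v = 0"
  then have "\<forall>r\<in>I. Aq r v = 0" using qf_bq_zero by blast
  then show "(\<Sum>s\<in>I \<times> J. v s *\<^sub>R cq Y s) = 0" unfolding ell by simp
qed

lemma weak_to_coef:
  assumes u: "\<forall>t\<in>I \<times> J. (\<Sum>s\<in>I \<times> J. bq s t *\<^sub>R u s) = cq Y t"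
    and i0: "i0 \<in> I" and j0: "j0 \<in> J"
  shows "acoef i0 j0 (\<lambda>i j. u (i, j)) = (\<Sum>r\<in>I. Mc j0 r i0 *\<^sub>R (Yt Y r - (\<Sum>m\<in>J-{j0}. acoef r m (\<lambda>i j. u (i, j)))))"
proof -
  let ?u = "\<lambda>i j. u (i, j)"
  have "(\<Sum>s\<in>I \<times> J. bq s (i0, j0) *\<^sub>R u s) = cq Y (i0, j0)" using u i0 j0 by auto
  also have "(\<Sum>s\<in>I \<times> J. bq s (i0, j0) *\<^sub>R u s) =
      (\<Sum>i\<in>I. bq (i, j0) (i0, j0) *\<^sub>R u (i, j0)) + (\<Sum>j\<in>J-{j0}. \<Sum>i\<in>I. bq (i, j) (i0, j0) *\<^sub>R u (i, j))"
    unfolding sum_IJ using j0 by (simp add: sum.remove)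
  also have "(\<Sum>i\<in>I. bq (i, j0) (i0, j0) *\<^sub>R u (i, j0)) = inverse N *\<^sub>R acoef i0 j0 ?u"
  proof -
    have "(\<Sum>i\<in>I. bq (i, j0) (i0, j0) *\<^sub>R u (i, j0)) = (\<Sum>i\<in>I. (inverse N * Mc j0 i0 i) *\<^sub>R u (i, j0))"
      using Q_sum[OF j0 _ i0] by (intro sum.cong refl) (simp add: bq_def Mc_sym[of j0 i0] divide_inverse mult_ac)
    then show ?thesis unfolding acoef_def by (simp add: scaleR_sum_right)
  qed
  also have "(\<Sum>j\<in>J-{j0}. \<Sum>i\<in>I. bq (i, j) (i0, j0) *\<^sub>R u (i, j)) =
      inverse N *\<^sub>R (\<Sum>r\<in>I. Mc j0 r i0 *\<^sub>R (\<Sum>m\<in>J-{j0}. acoef r m ?u))"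
  proof -
    have "(\<Sum>j\<in>J-{j0}. \<Sum>i\<in>I. bq (i, j) (i0, j0) *\<^sub>R u (i, j)) =
        (\<Sum>j\<in>J-{j0}. \<Sum>i\<in>I. \<Sum>r\<in>I. (inverse N * (Mc j0 r i0 * Mc j r i)) *\<^sub>R u (i, j))"
      by (intro sum.cong refl) (auto simp: bq_def scaleR_sum_left divide_inverse mult_ac sum_distrib_left)
    also have "\<dots> = (\<Sum>j\<in>J-{j0}. \<Sum>r\<in>I. \<Sum>i\<in>I. (inverse N * (Mc j0 r i0 * Mc j r i)) *\<^sub>R u (i, j))"
      by (rule sum.cong[OF refl], rule sum.swap)
    also have "\<dots> = (\<Sum>r\<in>I. \<Sum>j\<in>J-{j0}. \<Sum>i\<in>I. (inverse N * (Mc j0 r i0 * Mc j r i)) *\<^sub>R u (i, j))"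
      by (rule sum.swap)
    also have "\<dots> = inverse N *\<^sub>R (\<Sum>r\<in>I. Mc j0 r i0 *\<^sub>R (\<Sum>m\<in>J-{j0}. acoef r m ?u))"
      unfolding acoef_def by (simp add: scaleR_sum_right)
    finally show ?thesis .
  qed
  finally have "inverse N *\<^sub>R acoef i0 j0 ?u + inverse N *\<^sub>R (\<Sum>r\<in>I. Mc j0 r i0 *\<^sub>R (\<Sum>m\<in>J-{j0}. acoef r m ?u))
      = inverse N *\<^sub>R (\<Sum>r\<in>I. Mc j0 r i0 *\<^sub>R Yt Y r)" unfolding cq_def by simp
  then have "acoef i0 j0 ?u + (\<Sum>r\<in>I. Mc j0 r i0 *\<^sub>R (\<Sum>m\<in>J-{j0}. acoef r m ?u))
      = (\<Sum>r\<in>I. Mc j0 r i0 *\<^sub>R Yt Y r)" using N_pos by (simp add: scaleR_add_right[symmetric])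
  then show ?thesis by (simp add: scaleR_diff_right sum_subtractf algebra_simps)
qed

end


context sbf begin

lemma sum_Yt: "(\<Sum>i\<in>I. Yt Y i) = 0"
proof -
  have "(\<Sum>i\<in>I. Yt Y i) = (\<Sum>i\<in>I. Y i) - real (card I) *\<^sub>R f0v Y"
    unfolding Yt_def by (simp add: sum_subtractf sum_constant_scaleR)
  also have "real (card I) *\<^sub>R f0v Y = (\<Sum>i\<in>I. Y i)"
    unfolding f0v_def using N_pos by (simp add: N_def)
  finally show ?thesis by simp
qed

lemma acoef_sum: assumes m: "m \<in> J" shows "(\<Sum>i\<in>I. acoef i m \<beta>) = (\<Sum>l\<in>I. \<beta> l m)"
proof -
  have "(\<Sum>i\<in>I. acoef i m \<beta>) = (\<Sum>i\<in>I. \<Sum>l\<in>I. Mc m i l *\<^sub>R \<beta> l m)"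
    unfolding acoef_def ..
  also have "\<dots> = (\<Sum>l\<in>I. \<Sum>i\<in>I. Mc m i l *\<^sub>R \<beta> l m)" by (rule sum.swap)
  also have "\<dots> = (\<Sum>l\<in>I. (\<Sum>i\<in>I. Mc m i l) *\<^sub>R \<beta> l m)" by (simp add: scaleR_sum_left)
  also have "\<dots> = (\<Sum>l\<in>I. \<beta> l m)" using Mc_col[OF m] by simp
  finally show ?thesis .
qed

lemma acoef_shift: assumes m: "m \<in> J" and i: "i \<in> I"
  shows "acoef i m (\<lambda>l j. \<beta> l j - c j) = acoef i m \<beta> - c m"
proof -
  have "acoef i m (\<lambda>l j. \<beta> l j - c j) = acoef i m \<beta> - (\<Sum>l\<in>I. Mc m i l) *\<^sub>R c m"
    unfolding acoef_def by (simp add: scaleR_diff_right sum_subtractf scaleR_sum_left)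
  then show ?thesis using Mc_row[OF m i] by simp
qed

lemma coef_exists:
  "\<exists>\<beta>. (\<forall>i\<in>I. \<forall>j\<in>J. \<beta> i j = Yt Y i - (\<Sum>m\<in>J-{j}. acoef i m \<beta>)) \<and> (\<forall>j\<in>J. (\<Sum>i\<in>I. \<beta> i j) = 0)"
proof -
  obtain u where u: "\<forall>t\<in>I \<times> J. (\<Sum>s\<in>I \<times> J. bq s t *\<^sub>R u s) = cq Y t" using sol_u by blast
  define \<beta>0 where "\<beta>0 i j = u (i, j)" for i j
  define \<beta>1 where "\<beta>1 r j = Yt Y r - (\<Sum>m\<in>J-{j}. acoef r m \<beta>0)" for r j
  have eqa: "acoef i j \<beta>0 = acoef i j \<beta>1" if i: "i \<in> I" and j: "j \<in> J" for i j
  proof -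
    have "acoef i j \<beta>0 = (\<Sum>r\<in>I. Mc j r i *\<^sub>R \<beta>1 r j)"
      using weak_to_coef[OF u i j] unfolding \<beta>0_def[abs_def] \<beta>1_def by simp
    also have "\<dots> = acoef i j \<beta>1" unfolding acoef_def using Mc_sym by simp
    finally show ?thesis .
  qed
  have sys1: "\<beta>1 i j = Yt Y i - (\<Sum>m\<in>J-{j}. acoef i m \<beta>1)" if i: "i \<in> I" and j: "j \<in> J" for i j
  proof -
    have "(\<Sum>m\<in>J-{j}. acoef i m \<beta>0) = (\<Sum>m\<in>J-{j}. acoef i m \<beta>1)" using eqa i by (intro sum.cong) auto
    then show ?thesis unfolding \<beta>1_def[of i j] by simp
  qed
  define s where "s j = (\<Sum>l\<in>I. \<beta>1 l j)" for j
  have s_rel: "s j = - (\<Sum>m\<in>J-{j}. s m)" if j: "j \<in> J" for j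
  proof -
    have "s j = (\<Sum>i\<in>I. Yt Y i) - (\<Sum>i\<in>I. \<Sum>m\<in>J-{j}. acoef i m \<beta>1)"
      unfolding s_def using sys1 j by (simp add: sum_subtractf)
    also have "(\<Sum>i\<in>I. \<Sum>m\<in>J-{j}. acoef i m \<beta>1) = (\<Sum>m\<in>J-{j}. s m)"
      unfolding s_def by (subst sum.swap) (auto intro!: sum.cong acoef_sum)
    finally show ?thesis using sum_Yt by simp
  qed
  have s_sum: "(\<Sum>m\<in>J. s m) = 0"
  proof -
    have j1: "1 \<in> J" using d by simp
    have "(\<Sum>m\<in>J. s m) = s 1 + (\<Sum>m\<in>J-{1}. s m)" using j1 by (simp add: sum.remove)
    then show ?thesis using s_rel[OF j1] by simp
  qed
  define \<beta> where "\<beta> i j = \<beta>1 i j - inverse N *\<^sub>R s j" for i j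
  have "\<beta> i j = Yt Y i - (\<Sum>m\<in>J-{j}. acoef i m \<beta>)" if i: "i \<in> I" and j: "j \<in> J" for i j
  proof -
    have "(\<Sum>m\<in>J-{j}. acoef i m \<beta>) = (\<Sum>m\<in>J-{j}. acoef i m \<beta>1 - inverse N *\<^sub>R s m)"
      unfolding \<beta>_def[abs_def] using i by (intro sum.cong refl acoef_shift) auto
    also have "\<dots> = (\<Sum>m\<in>J-{j}. acoef i m \<beta>1) + inverse N *\<^sub>R s j"
      using s_rel[OF j] by (simp add: sum_subtractf scaleR_sum_right[symmetric])
    finally show ?thesis unfolding \<beta>_def using sys1[OF i j] by (simp add: algebra_simps)
  qed
  moreover have "(\<Sum>i\<in>I. \<beta> i j) = 0" if j: "j \<in> J" for j
  proof -
    have "(\<Sum>i\<in>I. \<beta> i j) = s j - (real (card I) * inverse N) *\<^sub>R s j"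
      unfolding \<beta>_def s_def by (simp add: sum_subtractf sum_constant_scaleR divide_inverse_commute)
    then show ?thesis using N_pos by (simp add: N_def)
  qed
  ultimately show ?thesis by blast
qed

end


context sbf begin

lemma int_vsum:
  fixes c :: "'a \<Rightarrow> 'h::{banach,second_countable_topology}"
  assumes A: "finite A" and g: "\<And>a. a \<in> A \<Longrightarrow> bm m (g a)"
  shows "integrable (M m) (\<lambda>t. \<Sum>a\<in>A. g a t *\<^sub>R c a)"
    and "integral\<^sup>L (M m) (\<lambda>t. \<Sum>a\<in>A. g a t *\<^sub>R c a) = (\<Sum>a\<in>A. integral\<^sup>L (M m) (g a) *\<^sub>R c a)"
proof -
  show "integrable (M m) (\<lambda>t. \<Sum>a\<in>A. g a t *\<^sub>R c a)"
    using g by (intro Bochner_Integration.integrable_sum integrable_scaleR_left bm_int) auto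
  have "integral\<^sup>L (M m) (\<lambda>t. \<Sum>a\<in>A. g a t *\<^sub>R c a) = (\<Sum>a\<in>A. integral\<^sup>L (M m) (\<lambda>t. g a t *\<^sub>R c a))"
    using g by (intro Bochner_Integration.integral_sum integrable_scaleR_left bm_int) auto
  also have "\<dots> = (\<Sum>a\<in>A. integral\<^sup>L (M m) (g a) *\<^sub>R c a)"
    using g by (intro sum.cong refl Bochner_Integration.integral_scaleR_left bm_int) auto
  finally show "integral\<^sup>L (M m) (\<lambda>t. \<Sum>a\<in>A. g a t *\<^sub>R c a) = (\<Sum>a\<in>A. integral\<^sup>L (M m) (g a) *\<^sub>R c a)" .
qed

lemma rep_alg:
  fixes Y :: "nat \<Rightarrow> 'h::real_vector"
  assumes j: "j \<in> J" and x: "x \<in> D j"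
  shows "(\<Sum>i\<in>I. w j i x *\<^sub>R Y i) - f0v Y - (\<Sum>m\<in>J-{j}. \<Sum>i\<in>I. w j i x *\<^sub>R Z i m)
       = (\<Sum>i\<in>I. w j i x *\<^sub>R (Yt Y i - (\<Sum>m\<in>J-{j}. Z i m)))"
proof -
  have "(\<Sum>i\<in>I. w j i x *\<^sub>R (Yt Y i - (\<Sum>m\<in>J-{j}. Z i m))) =
      (\<Sum>i\<in>I. w j i x *\<^sub>R Y i) - (\<Sum>i\<in>I. w j i x) *\<^sub>R f0v Y - (\<Sum>i\<in>I. \<Sum>m\<in>J-{j}. w j i x *\<^sub>R Z i m)"
    unfolding Yt_def by (simp add: scaleR_diff_right sum_subtractf scaleR_sum_right scaleR_sum_left)
  also have "(\<Sum>i\<in>I. \<Sum>m\<in>J-{j}. w j i x *\<^sub>R Z i m) = (\<Sum>m\<in>J-{j}. \<Sum>i\<in>I. w j i x *\<^sub>R Z i m)"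
    by (rule sum.swap)
  finally show ?thesis using sum_w[OF j x] by simp
qed

definition "fsol (\<beta> :: nat \<Rightarrow> nat \<Rightarrow> 'h::real_vector) j x = (\<Sum>i\<in>I. w j i x *\<^sub>R \<beta> i j)"

lemma existence:
  fixes Y :: "nat \<Rightarrow> 'h::{banach,second_countable_topology}"
  shows "\<exists>f. SBF_system d L D h K n \<xi> Y f \<and> SBF_constraints d L D h K n \<xi> f"
proof -
  obtain \<beta> :: "nat \<Rightarrow> nat \<Rightarrow> 'h" where sys: "\<forall>i\<in>I. \<forall>j\<in>J. \<beta> i j = Yt Y i - (\<Sum>m\<in>J-{j}. acoef i m \<beta>)"
    and cons: "\<forall>j\<in>J. (\<Sum>i\<in>I. \<beta> i j) = 0"
    using coef_exists by blast
  define f where "f = fsol \<beta>"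
  have "SBF_system d L D h K n \<xi> Y f"
    unfolding SBF_system_def
  proof (intro ballI conjI)
    fix j x assume j: "j \<in> J" and x: "x \<in> D j"
    have ig: "(\<lambda>t. (pjk d L D h K n \<xi> j m x t / pj d L D h K n \<xi> j x) *\<^sub>R f m t)
        = (\<lambda>t. \<Sum>l\<in>I. ((\<Sum>i\<in>I. w j i x * k m i t) * w m l t) *\<^sub>R \<beta> l m)" for m
      unfolding f_def fsol_def pjk_ratio by (simp add: scaleR_sum_right)
    have bmg: "bm m (\<lambda>t. (\<Sum>i\<in>I. w j i x * k m i t) * w m l t)" if "m \<in> J" "l \<in> I" for m l
      using that by (intro bm_mult bm_sum finI bm_w bm_k) auto
    show "set_integrable (Leb (L m)) (D m) (\<lambda>t. (pjk d L D h K n \<xi> j m x t / pj d L D h K n \<xi> j x) *\<^sub>R f m t)"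
      if m: "m \<in> J - {j}" for m
    proof -
      have mJ: "m \<in> J" using m by auto
      show ?thesis unfolding integrable_M[OF mJ, symmetric] ig using mJ by (intro int_vsum(1) finI bmg) auto
    qed
    have "(LINT t:D m|Leb (L m). (pjk d L D h K n \<xi> j m x t / pj d L D h K n \<xi> j x) *\<^sub>R f m t)
        = (\<Sum>i\<in>I. w j i x *\<^sub>R acoef i m \<beta>)" if m: "m \<in> J - {j}" for m
    proof -
      have mJ: "m \<in> J" using m by auto
      have "(LINT t:D m|Leb (L m). (pjk d L D h K n \<xi> j m x t / pj d L D h K n \<xi> j x) *\<^sub>R f m t)
          = (\<Sum>l\<in>I. integral\<^sup>L (M m) (\<lambda>t. (\<Sum>i\<in>I. w j i x * k m i t) * w m l t) *\<^sub>R \<beta> l m)"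
        unfolding int_M[OF mJ, symmetric] ig using mJ by (intro int_vsum(2) finI bmg) auto
      also have "\<dots> = (\<Sum>l\<in>I. (\<Sum>i\<in>I. w j i x * Mc m i l) *\<^sub>R \<beta> l m)"
      proof (intro sum.cong refl arg_cong2[where f="(*\<^sub>R)"])
        fix l assume l: "l \<in> I"
        have "integral\<^sup>L (M m) (\<lambda>t. (\<Sum>i\<in>I. w j i x * k m i t) * w m l t)
            = integral\<^sup>L (M m) (\<lambda>t. \<Sum>i\<in>I. w j i x * (k m i t * w m l t))"
          by (intro Bochner_Integration.integral_cong refl) (simp add: sum_distrib_right sum_distrib_left mult_ac)
        also have "\<dots> = (\<Sum>i\<in>I. w j i x * Mc m i l)"
          unfolding Mc_w using mJ l by (subst int_sum_bm) (auto intro!: finI bm_mult bm_k bm_w)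
        finally show "integral\<^sup>L (M m) (\<lambda>t. (\<Sum>i\<in>I. w j i x * k m i t) * w m l t) = (\<Sum>i\<in>I. w j i x * Mc m i l)" .
      qed
      also have "\<dots> = (\<Sum>l\<in>I. \<Sum>i\<in>I. (w j i x * Mc m i l) *\<^sub>R \<beta> l m)"
        by (simp add: scaleR_sum_left)
      also have "\<dots> = (\<Sum>i\<in>I. \<Sum>l\<in>I. (w j i x * Mc m i l) *\<^sub>R \<beta> l m)"
        by (rule sum.swap)
      also have "\<dots> = (\<Sum>i\<in>I. w j i x *\<^sub>R acoef i m \<beta>)"
        unfolding acoef_def by (simp add: scaleR_sum_right)
      finally show ?thesis .
    qed
    then have "(\<Sum>m\<in>J-{j}. LINT t:D m|Leb (L m). (pjk d L D h K n \<xi> j m x t / pj d L D h K n \<xi> j x) *\<^sub>R f m t)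
        = (\<Sum>m\<in>J-{j}. \<Sum>i\<in>I. w j i x *\<^sub>R acoef i m \<beta>)" by simp
    moreover have "f j x = (\<Sum>i\<in>I. w j i x *\<^sub>R (Yt Y i - (\<Sum>m\<in>J-{j}. acoef i m \<beta>)))"
      unfolding f_def fsol_def using sys j by (intro sum.cong refl) auto
    ultimately show "f j x = mj d L D h K n \<xi> Y j x - f0 d D n \<xi> Y -
        (\<Sum>m\<in>J-{j}. LINT t:D m|Leb (L m). (pjk d L D h K n \<xi> j m x t / pj d L D h K n \<xi> j x) *\<^sub>R f m t)"
      unfolding mj_eq f0_eq f0v_def[symmetric]
      using rep_alg[OF j x, where Y=Y and Z="\<lambda>i m. acoef i m \<beta>"] by simp
  qed
  moreover have "SBF_constraints d L D h K n \<xi> f"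
    unfolding SBF_constraints_def
  proof (intro ballI conjI)
    fix j assume j: "j \<in> J"
    have e: "(\<lambda>x. pj d L D h K n \<xi> j x *\<^sub>R f j x) = (\<lambda>x. \<Sum>i\<in>I. (S j x / N * w j i x) *\<^sub>R \<beta> i j)"
      unfolding pj_eq f_def fsol_def by (simp add: scaleR_sum_right)
    have bmg: "bm j (\<lambda>x. S j x / N * w j i x)" if "i \<in> I" for i
      using j that by (auto intro!: bm_mult bm_S bm_w simp: divide_inverse)
    show "set_integrable (Leb (L j)) (D j) (\<lambda>x. pj d L D h K n \<xi> j x *\<^sub>R f j x)"
      unfolding integrable_M[OF j, symmetric] e by (intro int_vsum(1) finI bmg)
    have "(LINT x:D j|Leb (L j). pj d L D h K n \<xi> j x *\<^sub>R f j x) = integral\<^sup>L (M j) (\<lambda>x. \<Sum>i\<in>I. (S j x / N * w j i x) *\<^sub>R \<beta> i j)"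
      unfolding int_M[OF j, symmetric] e by (rule refl)
    also have "\<dots> = (\<Sum>i\<in>I. integral\<^sup>L (M j) (\<lambda>x. S j x / N * w j i x) *\<^sub>R \<beta> i j)"
      by (rule int_vsum(2)[OF finI bmg])
    also have "\<dots> = (\<Sum>i\<in>I. (1 / N) *\<^sub>R \<beta> i j)"
      by (rule sum.cong[OF refl], subst int_Sw[OF j], assumption, rule refl)
    also have "\<dots> = 0" using cons j by (simp add: scaleR_sum_right[symmetric])
    finally show "(LINT x:D j|Leb (L j). pj d L D h K n \<xi> j x *\<^sub>R f j x) = 0" .
    obtain B where B: "\<forall>x\<in>space (M j). \<bar>S j x\<bar> \<le> B" using bm_S[OF j] unfolding bm_def by blast
    define C where "C = (\<Sum>i\<in>I. norm (\<beta> i j))"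
    have fb: "norm (f j x) \<le> C" if x: "x \<in> D j" for x
    proof -
      have "norm (f j x) \<le> (\<Sum>i\<in>I. norm (w j i x *\<^sub>R \<beta> i j))" unfolding f_def fsol_def by (rule norm_sum)
      also have "\<dots> \<le> C" unfolding C_def
        using w_nonneg[OF j] w_le1[OF j] by (intro sum_mono) (auto intro!: mult_left_le_one_le)
      finally show ?thesis .
    qed
    have "(\<integral>\<^sup>+x\<in>D j. ennreal ((norm (f j x))\<^sup>2 * pj d L D h K n \<xi> j x) \<partial>Leb (L j))
        \<le> (\<integral>\<^sup>+x. ennreal (C\<^sup>2 * (B / N)) * indicator (D j) x \<partial>Leb (L j))"
    proof (intro nn_integral_mono)
      fix x
      show "ennreal ((norm (f j x))\<^sup>2 * pj d L D h K n \<xi> j x) * indicator (D j) x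
          \<le> ennreal (C\<^sup>2 * (B / N)) * indicator (D j) x"
      proof (cases "x \<in> D j")
        case True
        have "(norm (f j x))\<^sup>2 \<le> C\<^sup>2" using fb[OF True] by (intro power_mono) auto
        moreover have "pj d L D h K n \<xi> j x \<le> B / N" "pj d L D h K n \<xi> j x \<ge> 0"
          using B True space_M[OF j] N_pos S_nonneg[OF j] unfolding pj_eq
          by (auto intro!: divide_right_mono)
        ultimately have "(norm (f j x))\<^sup>2 * pj d L D h K n \<xi> j x \<le> C\<^sup>2 * (B / N)"
          by (intro mult_mono) auto
        then show ?thesis using True by (simp add: ennreal_leI)
      qed simp
    qed
    also have "\<dots> = ennreal (C\<^sup>2 * (B / N)) * emeasure (Leb (L j)) (D j)"
      using D_sets[OF j] by (rule nn_integral_cmult_indicator)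
    also have "\<dots> < \<infinity>" using D_fin[OF j] by (simp add: ennreal_mult_less_top)
    finally show "(\<integral>\<^sup>+x\<in>D j. ennreal ((norm (f j x))\<^sup>2 * pj d L D h K n \<xi> j x) \<partial>Leb (L j)) < \<infinity>" .
  qed
  ultimately show ?thesis by blast
qed

end


context sbf begin

lemma w_self_pos: assumes j: "j \<in> J" and i: "i \<in> I" shows "w j i (\<xi> i j) > 0"
  unfolding w_def using k_self[OF j, of i] S_pos[OF j I_D[OF i j]] by simp

lemma k_integrable:
  fixes Y :: "nat \<Rightarrow> 'h::{banach,second_countable_topology}"
  assumes sys: "SBF_system d L D h K n \<xi> Y f" and j: "j \<in> J" and m: "m \<in> J - {j}" and i: "i \<in> I"
  shows "integrable (M m) (\<lambda>t. k m i t *\<^sub>R f m t)"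
proof -
  have mJ: "m \<in> J" using m by auto
  define x0 where "x0 = \<xi> i j"
  have x0: "x0 \<in> D j" unfolding x0_def using I_D[OF i j] .
  define T where "T t = (\<Sum>l\<in>I. w j l x0 * k m l t)" for t
  have "set_integrable (Leb (L m)) (D m) (\<lambda>t. (pjk d L D h K n \<xi> j m x0 t / pj d L D h K n \<xi> j x0) *\<^sub>R f m t)"
    using sys j x0 m unfolding SBF_system_def by blast
  then have iT: "integrable (M m) (\<lambda>t. T t *\<^sub>R f m t)"
    unfolding integrable_M[OF mJ, symmetric] pjk_ratio T_def .
  have wpos: "w j i x0 > 0" unfolding x0_def by (rule w_self_pos[OF j i])
  have kT: "w j i x0 * k m i t \<le> T t" for t
    unfolding T_def using i finI w_nonneg[OF j] k_nonneg[OF mJ]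
    by (intro member_le_sum[of i I "\<lambda>l. w j l x0 * k m l t"]) auto
  have Tnn: "T t \<ge> 0" for t unfolding T_def using w_nonneg[OF j] k_nonneg[OF mJ] by (intro sum_nonneg) auto
  have eq: "k m i t *\<^sub>R f m t = (k m i t / T t) *\<^sub>R (T t *\<^sub>R f m t)" for t
  proof (cases "T t = 0")
    case True
    then have "k m i t = 0" using kT[of t] wpos k_nonneg[OF mJ, of i t]
      by (smt (verit) mult_pos_pos)
    then show ?thesis by simp
  next
    case False then show ?thesis by simp
  qed
  have Tm: "T \<in> borel_measurable (M m)"
    unfolding T_def[abs_def] using mJ by (intro bm_meas bm_sum finI bm_mult bm_const bm_k)
  have meas: "(\<lambda>t. k m i t *\<^sub>R f m t) \<in> borel_measurable (M m)"
    unfolding eq using Tm bm_meas[OF bm_k[OF mJ, of i]] borel_measurable_integrable[OF iT]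
    by measurable
  show ?thesis
  proof (rule Bochner_Integration.integrable_bound[OF integrable_scaleR_right[OF iT, of "1 / w j i x0"] meas])
    show "AE t in M m. norm (k m i t *\<^sub>R f m t) \<le> norm ((1 / w j i x0) *\<^sub>R (T t *\<^sub>R f m t))"
    proof (rule AE_I2)
      fix t
      have "k m i t \<le> T t / w j i x0" using kT[of t] wpos by (simp add: field_simps)
      then have "k m i t * norm (f m t) \<le> (T t / w j i x0) * norm (f m t)"
        by (intro mult_right_mono) auto
      then show "norm (k m i t *\<^sub>R f m t) \<le> norm ((1 / w j i x0) *\<^sub>R (T t *\<^sub>R f m t))"
        using k_nonneg[OF mJ, of i t] wpos Tnn[of t] by simp
    qed
  qed
qed

lemma acoef_fsol: assumes m: "m \<in> J" and i: "i \<in> I"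
  shows "integral\<^sup>L (M m) (\<lambda>t. k m i t *\<^sub>R fsol b m t) = acoef i m (b :: nat \<Rightarrow> nat \<Rightarrow> 'h::{banach,second_countable_topology})"
proof -
  have "integral\<^sup>L (M m) (\<lambda>t. k m i t *\<^sub>R fsol b m t) = integral\<^sup>L (M m) (\<lambda>t. \<Sum>l\<in>I. (k m i t * w m l t) *\<^sub>R b l m)"
    unfolding fsol_def by (simp add: scaleR_sum_right)
  also have "\<dots> = (\<Sum>l\<in>I. integral\<^sup>L (M m) (\<lambda>t. k m i t * w m l t) *\<^sub>R b l m)"
    using m by (intro int_vsum(2) finI bm_mult bm_k bm_w) auto
  also have "\<dots> = acoef i m b" unfolding acoef_def Mc_w ..
  finally show ?thesis .
qed

lemma rep_solution:
  fixes Y :: "nat \<Rightarrow> 'h::{banach,second_countable_topology}"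
  assumes sys: "SBF_system d L D h K n \<xi> Y f"
  shows "\<exists>b. (\<forall>i\<in>I. \<forall>j\<in>J. b i j = Yt Y i - (\<Sum>m\<in>J-{j}. acoef i m b)) \<and> (\<forall>j\<in>J. \<forall>x\<in>D j. f j x = fsol b j x)"
proof -
  define C where "C i m = integral\<^sup>L (M m) (\<lambda>t. k m i t *\<^sub>R f m t)" for i m
  define b where "b i j = Yt Y i - (\<Sum>m\<in>J-{j}. C i m)" for i j
  have rep: "f j x = fsol b j x" if j: "j \<in> J" and x: "x \<in> D j" for j x
  proof -
    have L: "(LINT t:D m|Leb (L m). (pjk d L D h K n \<xi> j m x t / pj d L D h K n \<xi> j x) *\<^sub>R f m t)
        = (\<Sum>l\<in>I. w j l x *\<^sub>R C l m)" if m: "m \<in> J - {j}" for m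
    proof -
      have mJ: "m \<in> J" using m by auto
      have "(LINT t:D m|Leb (L m). (pjk d L D h K n \<xi> j m x t / pj d L D h K n \<xi> j x) *\<^sub>R f m t)
          = integral\<^sup>L (M m) (\<lambda>t. \<Sum>l\<in>I. w j l x *\<^sub>R (k m l t *\<^sub>R f m t))"
        unfolding int_M[OF mJ, symmetric] pjk_ratio by (simp add: scaleR_sum_left)
      also have "\<dots> = (\<Sum>l\<in>I. integral\<^sup>L (M m) (\<lambda>t. w j l x *\<^sub>R (k m l t *\<^sub>R f m t)))"
        using k_integrable[OF sys j m] by (intro Bochner_Integration.integral_sum integrable_scaleR_right) auto
      also have "\<dots> = (\<Sum>l\<in>I. w j l x *\<^sub>R C l m)" unfolding C_def
        by (intro sum.cong refl Bochner_Integration.integral_scaleR_right)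
      finally show ?thesis .
    qed
    have "f j x = mj d L D h K n \<xi> Y j x - f0 d D n \<xi> Y -
        (\<Sum>m\<in>J-{j}. LINT t:D m|Leb (L m). (pjk d L D h K n \<xi> j m x t / pj d L D h K n \<xi> j x) *\<^sub>R f m t)"
      using sys j x unfolding SBF_system_def by blast
    also have "\<dots> = (\<Sum>i\<in>I. w j i x *\<^sub>R Y i) - f0v Y - (\<Sum>m\<in>J-{j}. \<Sum>l\<in>I. w j l x *\<^sub>R C l m)"
      unfolding mj_eq f0_eq f0v_def[symmetric] using L by simp
    also have "\<dots> = fsol b j x"
      unfolding rep_alg[OF j x] fsol_def b_def ..
    finally show ?thesis .
  qed
  have "C i m = acoef i m b" if i: "i \<in> I" and m: "m \<in> J" for i m
  proof -
    have "C i m = integral\<^sup>L (M m) (\<lambda>t. k m i t *\<^sub>R fsol b m t)"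
      unfolding C_def using m rep by (intro int_cong_D) auto
    then show ?thesis using acoef_fsol[OF m i] by simp
  qed
  then have "b i j = Yt Y i - (\<Sum>m\<in>J-{j}. acoef i m b)" if i: "i \<in> I" and j: "j \<in> J" for i j
    unfolding b_def[of i j] using i by (intro arg_cong2[where f="(-)"] refl sum.cong) auto
  then show ?thesis using rep by blast
qed

lemma cons_sum:
  fixes b :: "nat \<Rightarrow> nat \<Rightarrow> 'h::{banach,second_countable_topology}"
  assumes cons: "SBF_constraints d L D h K n \<xi> f" and rep: "\<forall>j\<in>J. \<forall>x\<in>D j. f j x = fsol b j x"
    and j: "j \<in> J"
  shows "(\<Sum>i\<in>I. b i j) = 0"
proof -
  have bmg: "bm j (\<lambda>x. S j x / N * w j i x)" if "i \<in> I" for i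
    using j that by (auto intro!: bm_mult bm_S bm_w simp: divide_inverse)
  have "0 = (LINT x:D j|Leb (L j). pj d L D h K n \<xi> j x *\<^sub>R f j x)"
    using cons j unfolding SBF_constraints_def by auto
  also have "\<dots> = integral\<^sup>L (M j) (\<lambda>x. \<Sum>i\<in>I. (S j x / N * w j i x) *\<^sub>R b i j)"
    unfolding int_M[OF j, symmetric] pj_eq using rep j
    by (intro int_cong_D) (auto simp: fsol_def scaleR_sum_right)
  also have "\<dots> = (\<Sum>i\<in>I. integral\<^sup>L (M j) (\<lambda>x. S j x / N * w j i x) *\<^sub>R b i j)"
    by (rule int_vsum(2)[OF finI bmg])
  also have "\<dots> = (\<Sum>i\<in>I. (1 / N) *\<^sub>R b i j)"
    by (rule sum.cong[OF refl], subst int_Sw[OF j], assumption, rule refl)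
  also have "\<dots> = (1 / N) *\<^sub>R (\<Sum>i\<in>I. b i j)" by (simp add: scaleR_sum_right)
  finally show ?thesis using N_pos by simp
qed

end


context sbf begin

lemma psf: "product_sigma_finite M"
  unfolding product_sigma_finite_def using finite_M by (simp add: finite_measure_def)

lemma prod_int:
  assumes \<rho>: "\<And>q. q \<in> J \<Longrightarrow> bm q (\<rho> q)" and \<rho>1: "\<And>q. q \<in> J \<Longrightarrow> integral\<^sup>L (M q) (\<rho> q) = 1"
    and j: "j \<in> J" and m: "m \<in> J" and g: "bm j g" and g': "bm m g'"
  shows "integrable (PiM J M) (\<lambda>x. (\<Prod>q\<in>J. \<rho> q (x q)) * (g (x j) * g' (x m)))"
    and "(\<integral>x. (\<Prod>q\<in>J. \<rho> q (x q)) * (g (x j) * g' (x m)) \<partial>PiM J M) =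
      (if j = m then (\<integral>y. \<rho> j y * (g y * g' y) \<partial>M j)
       else (\<integral>y. \<rho> j y * g y \<partial>M j) * (\<integral>y. \<rho> m y * g' y \<partial>M m))"
proof -
  define \<phi> where "\<phi> q y = \<rho> q y * (if q = j then g y else 1) * (if q = m then g' y else 1)" for q y
  have e: "(\<Prod>q\<in>J. \<rho> q (x q)) * (g (x j) * g' (x m)) = (\<Prod>q\<in>J. \<phi> q (x q))" for x
    unfolding \<phi>_def prod.distrib using j m by simp
  have bphi: "bm q (\<phi> q)" if q: "q \<in> J" for q
    unfolding \<phi>_def using q g g' \<rho>[OF q] by (cases "q = j"; cases "q = m") (auto intro!: bm_mult)
  have ibphi: "\<And>q. q \<in> J \<Longrightarrow> integrable (M q) (\<phi> q)" using bphi bm_int by blast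
  show "integrable (PiM J M) (\<lambda>x. (\<Prod>q\<in>J. \<rho> q (x q)) * (g (x j) * g' (x m)))"
    unfolding e by (rule product_sigma_finite.product_integrable_prod[OF psf finite_atLeastAtMost ibphi])
  have "(\<integral>x. (\<Prod>q\<in>J. \<rho> q (x q)) * (g (x j) * g' (x m)) \<partial>PiM J M) = (\<Prod>q\<in>J. integral\<^sup>L (M q) (\<phi> q))"
    unfolding e by (rule product_sigma_finite.product_integral_prod[OF psf finite_atLeastAtMost ibphi])
  also have "\<dots> = (\<Prod>q\<in>J. (if q = j then (if j = m then (\<integral>y. \<rho> j y * (g y * g' y) \<partial>M j) else (\<integral>y. \<rho> j y * g y \<partial>M j)) else 1) *
       (if q = m \<and> q \<noteq> j then (\<integral>y. \<rho> m y * g' y \<partial>M m) else 1))"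
  proof (intro prod.cong refl)
    fix q assume q: "q \<in> J"
    show "integral\<^sup>L (M q) (\<phi> q) = (if q = j then (if j = m then (\<integral>y. \<rho> j y * (g y * g' y) \<partial>M j) else (\<integral>y. \<rho> j y * g y \<partial>M j)) else 1) *
       (if q = m \<and> q \<noteq> j then (\<integral>y. \<rho> m y * g' y \<partial>M m) else 1)"
      unfolding \<phi>_def using \<rho>1[OF q] by (cases "q = j"; cases "q = m") (auto simp: mult_ac)
  qed
  also have "\<dots> = (if j = m then (\<integral>y. \<rho> j y * (g y * g' y) \<partial>M j)
       else (\<integral>y. \<rho> j y * g y \<partial>M j) * (\<integral>y. \<rho> m y * g' y \<partial>M m))"
  proof (cases "j = m")
    case True
    have "(\<Prod>q\<in>J. (if q = m \<and> q \<noteq> j then (\<integral>y. \<rho> m y * g' y \<partial>M m) else 1)) = 1"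
      using True by (intro prod.neutral) auto
    then show ?thesis unfolding prod.distrib using j True by simp
  next
    case False
    have "(\<Prod>q\<in>J. (if q = m \<and> q \<noteq> j then (\<integral>y. \<rho> m y * g' y \<partial>M m) else 1))
        = (\<Prod>q\<in>J. (if q = m then (\<integral>y. \<rho> m y * g' y \<partial>M m) else 1))"
      using False by (intro prod.cong) auto
    then show ?thesis unfolding prod.distrib using j m False by simp
  qed
  finally show "(\<integral>x. (\<Prod>q\<in>J. \<rho> q (x q)) * (g (x j) * g' (x m)) \<partial>PiM J M) =
      (if j = m then (\<integral>y. \<rho> j y * (g y * g' y) \<partial>M j)
       else (\<integral>y. \<rho> j y * g y \<partial>M j) * (\<integral>y. \<rho> m y * g' y \<partial>M m))" .
qed

lemma int_sum4:
  fixes F :: "'i \<Rightarrow> 'j \<Rightarrow> 'k \<Rightarrow> 'l \<Rightarrow> 'a \<Rightarrow> real"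
  assumes iF: "\<And>j i m l. j \<in> A1 \<Longrightarrow> i \<in> A2 \<Longrightarrow> m \<in> A3 \<Longrightarrow> l \<in> A4 \<Longrightarrow> integrable Mu (F j i m l)"
  shows "integrable Mu (\<lambda>x. \<Sum>j\<in>A1. \<Sum>i\<in>A2. \<Sum>m\<in>A3. \<Sum>l\<in>A4. c j i m l * F j i m l x)"
    and "integral\<^sup>L Mu (\<lambda>x. \<Sum>j\<in>A1. \<Sum>i\<in>A2. \<Sum>m\<in>A3. \<Sum>l\<in>A4. c j i m l * F j i m l x)
       = (\<Sum>j\<in>A1. \<Sum>i\<in>A2. \<Sum>m\<in>A3. \<Sum>l\<in>A4. c j i m l * integral\<^sup>L Mu (F j i m l))"
proof -
  have i0: "integrable Mu (\<lambda>x. c j i m l * F j i m l x)" if "j \<in> A1" "i \<in> A2" "m \<in> A3" "l \<in> A4" for j i m l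
    using iF[OF that] by (rule integrable_mult_right)
  have i1: "integrable Mu (\<lambda>x. \<Sum>l\<in>A4. c j i m l * F j i m l x)" if "j \<in> A1" "i \<in> A2" "m \<in> A3" for j i m
    using i0[OF that] by (rule Bochner_Integration.integrable_sum)
  have i2: "integrable Mu (\<lambda>x. \<Sum>m\<in>A3. \<Sum>l\<in>A4. c j i m l * F j i m l x)" if "j \<in> A1" "i \<in> A2" for j i
    using i1[OF that] by (rule Bochner_Integration.integrable_sum)
  have i3: "integrable Mu (\<lambda>x. \<Sum>i\<in>A2. \<Sum>m\<in>A3. \<Sum>l\<in>A4. c j i m l * F j i m l x)" if "j \<in> A1" for j
    using i2[OF that] by (rule Bochner_Integration.integrable_sum)
  show "integrable Mu (\<lambda>x. \<Sum>j\<in>A1. \<Sum>i\<in>A2. \<Sum>m\<in>A3. \<Sum>l\<in>A4. c j i m l * F j i m l x)"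
    using i3 by (rule Bochner_Integration.integrable_sum)
  have "integral\<^sup>L Mu (\<lambda>x. \<Sum>j\<in>A1. \<Sum>i\<in>A2. \<Sum>m\<in>A3. \<Sum>l\<in>A4. c j i m l * F j i m l x)
      = (\<Sum>j\<in>A1. integral\<^sup>L Mu (\<lambda>x. \<Sum>i\<in>A2. \<Sum>m\<in>A3. \<Sum>l\<in>A4. c j i m l * F j i m l x))"
    using i3 by (rule Bochner_Integration.integral_sum)
  also have "\<dots> = (\<Sum>j\<in>A1. \<Sum>i\<in>A2. integral\<^sup>L Mu (\<lambda>x. \<Sum>m\<in>A3. \<Sum>l\<in>A4. c j i m l * F j i m l x))"
    by (rule sum.cong[OF refl], rule Bochner_Integration.integral_sum, erule i2, assumption)
  also have "\<dots> = (\<Sum>j\<in>A1. \<Sum>i\<in>A2. \<Sum>m\<in>A3. integral\<^sup>L Mu (\<lambda>x. \<Sum>l\<in>A4. c j i m l * F j i m l x))"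
    by (rule sum.cong[OF refl], rule sum.cong[OF refl], rule Bochner_Integration.integral_sum, erule (2) i1)
  also have "\<dots> = (\<Sum>j\<in>A1. \<Sum>i\<in>A2. \<Sum>m\<in>A3. \<Sum>l\<in>A4. integral\<^sup>L Mu (\<lambda>x. c j i m l * F j i m l x))"
    by (rule sum.cong[OF refl], rule sum.cong[OF refl], rule sum.cong[OF refl], rule Bochner_Integration.integral_sum, erule (3) i0)
  also have "\<dots> = (\<Sum>j\<in>A1. \<Sum>i\<in>A2. \<Sum>m\<in>A3. \<Sum>l\<in>A4. c j i m l * integral\<^sup>L Mu (F j i m l))"
    by simp
  finally show "integral\<^sup>L Mu (\<lambda>x. \<Sum>j\<in>A1. \<Sum>i\<in>A2. \<Sum>m\<in>A3. \<Sum>l\<in>A4. c j i m l * F j i m l x)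
       = (\<Sum>j\<in>A1. \<Sum>i\<in>A2. \<Sum>m\<in>A3. \<Sum>l\<in>A4. c j i m l * integral\<^sup>L Mu (F j i m l))" .
qed

lemma inner_sum_sum: "inner (\<Sum>j\<in>A. a j) (\<Sum>m\<in>B. b m) = (\<Sum>j\<in>A. \<Sum>m\<in>B. inner (a j) (b m))"
  unfolding inner_sum_left by (simp only: inner_sum_right)

lemma inner_fsol_fsol: "inner (fsol \<delta> j y) (fsol \<delta> m z) = (\<Sum>i\<in>I. \<Sum>l\<in>I. (w j i y * w m l z) * inner (\<delta> i j) (\<delta> l m))"
  unfolding fsol_def inner_sum_sum by (simp add: mult_ac)

lemma inner_fsol_left: "inner (fsol \<delta> j y) Z = (\<Sum>i\<in>I. w j i y * inner (\<delta> i j) Z)"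
  unfolding fsol_def by (simp add: inner_sum_left)

lemma inner_fsol_right: "inner Z (fsol \<delta> m y) = (\<Sum>l\<in>I. w m l y * inner Z (\<delta> l m))"
  unfolding fsol_def by (simp add: inner_sum_right)

definition "Eq \<rho> j i m l = (if j = m then (\<integral>y. \<rho> j y * (w j i y * w j l y) \<partial>M j)
    else (\<integral>y. \<rho> j y * w j i y \<partial>M j) * (\<integral>y. \<rho> m y * w m l y \<partial>M m))"

lemma PF:
  fixes \<delta> :: "nat \<Rightarrow> nat \<Rightarrow> 'h::{real_inner,banach,second_countable_topology}"
  assumes \<rho>: "\<And>q. q \<in> J \<Longrightarrow> bm q (\<rho> q)" and \<rho>1: "\<And>q. q \<in> J \<Longrightarrow> integral\<^sup>L (M q) (\<rho> q) = 1"
  shows "integrable (PiM J M) (\<lambda>x. (\<Prod>q\<in>J. \<rho> q (x q)) * (norm (\<Sum>j\<in>J. fsol \<delta> j (x j)))\<^sup>2)"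
    and "(\<integral>x. (\<Prod>q\<in>J. \<rho> q (x q)) * (norm (\<Sum>j\<in>J. fsol \<delta> j (x j)))\<^sup>2 \<partial>PiM J M) =
      (\<Sum>j\<in>J. \<Sum>m\<in>J. \<Sum>i\<in>I. \<Sum>l\<in>I. inner (\<delta> i j) (\<delta> l m) * Eq \<rho> j i m l)"
proof -
  define F where "F j i m l x = (\<Prod>q\<in>J. \<rho> q (x q)) * (w j i (x j) * w m l (x m))" for j i m l x
  have e: "(\<Prod>q\<in>J. \<rho> q (x q)) * (norm (\<Sum>j\<in>J. fsol \<delta> j (x j)))\<^sup>2 =
      (\<Sum>j\<in>J. \<Sum>m\<in>J. \<Sum>i\<in>I. \<Sum>l\<in>I. inner (\<delta> i j) (\<delta> l m) * F j i m l x)" for x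
    unfolding power2_norm_eq_inner inner_sum_sum inner_fsol_fsol F_def sum_distrib_left
    by (intro sum.cong refl) (simp add: mult_ac)
  have iF: "integrable (PiM J M) (F j i m l)" and vF: "integral\<^sup>L (PiM J M) (F j i m l) = Eq \<rho> j i m l"
    if "j \<in> J" "m \<in> J" "i \<in> I" "l \<in> I" for j i m l
    using prod_int[OF \<rho> \<rho>1 that(1) that(2) bm_w[OF that(1) that(3)] bm_w[OF that(2) that(4)]]
    unfolding F_def[abs_def] Eq_def by auto
  show "integrable (PiM J M) (\<lambda>x. (\<Prod>q\<in>J. \<rho> q (x q)) * (norm (\<Sum>j\<in>J. fsol \<delta> j (x j)))\<^sup>2)"
    unfolding e by (rule int_sum4(1)) (rule iF)
  have "(\<integral>x. (\<Prod>q\<in>J. \<rho> q (x q)) * (norm (\<Sum>j\<in>J. fsol \<delta> j (x j)))\<^sup>2 \<partial>PiM J M) =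
      (\<Sum>j\<in>J. \<Sum>m\<in>J. \<Sum>i\<in>I. \<Sum>l\<in>I. inner (\<delta> i j) (\<delta> l m) * integral\<^sup>L (PiM J M) (F j i m l))"
    unfolding e by (rule int_sum4(2)) (rule iF)
  also have "\<dots> = (\<Sum>j\<in>J. \<Sum>m\<in>J. \<Sum>i\<in>I. \<Sum>l\<in>I. inner (\<delta> i j) (\<delta> l m) * Eq \<rho> j i m l)"
    by (intro sum.cong refl arg_cong2[where f="(*)"] vF) auto
  finally show "(\<integral>x. (\<Prod>q\<in>J. \<rho> q (x q)) * (norm (\<Sum>j\<in>J. fsol \<delta> j (x j)))\<^sup>2 \<partial>PiM J M) =
      (\<Sum>j\<in>J. \<Sum>m\<in>J. \<Sum>i\<in>I. \<Sum>l\<in>I. inner (\<delta> i j) (\<delta> l m) * Eq \<rho> j i m l)" .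
qed

end


context sbf begin

definition "mu \<rho> (\<delta> :: nat \<Rightarrow> nat \<Rightarrow> 'h::real_vector) j = (\<Sum>i\<in>I. (\<integral>y. \<rho> j y * w j i y \<partial>M j) *\<^sub>R \<delta> i j)"

definition "Tq \<rho> (\<delta> :: nat \<Rightarrow> nat \<Rightarrow> 'h::real_inner) = (\<Sum>j\<in>J. \<Sum>m\<in>J. \<Sum>i\<in>I. \<Sum>l\<in>I. inner (\<delta> i j) (\<delta> l m) * Eq \<rho> j i m l)"

lemma Tq_split:
  "Tq \<rho> \<delta> = (\<Sum>j\<in>J. \<Sum>i\<in>I. \<Sum>l\<in>I. inner (\<delta> i j) (\<delta> l j) * Eq \<rho> j i j l)
     + (\<Sum>j\<in>J. \<Sum>m\<in>J-{j}. inner (mu \<rho> \<delta> j) (mu \<rho> \<delta> m))"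
proof -
  have "Tq \<rho> \<delta> = (\<Sum>j\<in>J. (\<Sum>i\<in>I. \<Sum>l\<in>I. inner (\<delta> i j) (\<delta> l j) * Eq \<rho> j i j l)
     + (\<Sum>m\<in>J-{j}. \<Sum>i\<in>I. \<Sum>l\<in>I. inner (\<delta> i j) (\<delta> l m) * Eq \<rho> j i m l))"
    unfolding Tq_def by (intro sum.cong refl) (simp add: sum.remove)
  also have "\<dots> = (\<Sum>j\<in>J. (\<Sum>i\<in>I. \<Sum>l\<in>I. inner (\<delta> i j) (\<delta> l j) * Eq \<rho> j i j l)
     + (\<Sum>m\<in>J-{j}. inner (mu \<rho> \<delta> j) (mu \<rho> \<delta> m)))"
  proof (intro sum.cong refl arg_cong2[where f="(+)"])
    fix j m assume "m \<in> J - {j}"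
    then have "j \<noteq> m" by auto
    then show "(\<Sum>i\<in>I. \<Sum>l\<in>I. inner (\<delta> i j) (\<delta> l m) * Eq \<rho> j i m l) = inner (mu \<rho> \<delta> j) (mu \<rho> \<delta> m)"
      unfolding mu_def inner_sum_sum Eq_def by (simp add: mult_ac)
  qed
  finally show ?thesis by (simp add: sum.distrib)
qed

lemma acoef_diff: "acoef i m (\<lambda>i j. b i j - b' i j) = acoef i m b - acoef i m b'"
  unfolding acoef_def by (simp add: scaleR_diff_right sum_subtractf)

lemma sum_inner_acoef: "(\<Sum>l\<in>I. inner (\<delta> i j) (\<delta> l j) * Mc j i l) = inner (\<delta> i j) (acoef i j \<delta>)"
  unfolding acoef_def inner_sum_right by (simp add: mult_ac)

lemma part2_alg:
  fixes \<delta> :: "nat \<Rightarrow> nat \<Rightarrow> 'h::real_inner"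
  assumes hom: "\<forall>i\<in>I. \<forall>j\<in>J. \<delta> i j = - (\<Sum>m\<in>J-{j}. acoef i m \<delta>)"
  shows "(\<Sum>r\<in>I. Tq (\<lambda>q. k q r) \<delta>) = 0"
proof -
  have E1: "Eq (\<lambda>q. k q r) j i j l = Q j r i l" for j r i l
    unfolding Eq_def Q_def by (simp add: mult_ac)
  have mu1: "mu (\<lambda>q. k q r) \<delta> j = acoef r j \<delta>" for r j
    unfolding mu_def acoef_def Mc_w ..
  have D: "(\<Sum>r\<in>I. \<Sum>j\<in>J. \<Sum>i\<in>I. \<Sum>l\<in>I. inner (\<delta> i j) (\<delta> l j) * Q j r i l)
      = (\<Sum>j\<in>J. \<Sum>i\<in>I. inner (\<delta> i j) (acoef i j \<delta>))"
  proof -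
    have "(\<Sum>r\<in>I. \<Sum>j\<in>J. \<Sum>i\<in>I. \<Sum>l\<in>I. inner (\<delta> i j) (\<delta> l j) * Q j r i l)
        = (\<Sum>j\<in>J. \<Sum>r\<in>I. \<Sum>i\<in>I. \<Sum>l\<in>I. inner (\<delta> i j) (\<delta> l j) * Q j r i l)" by (rule sum.swap)
    also have "\<dots> = (\<Sum>j\<in>J. \<Sum>i\<in>I. \<Sum>r\<in>I. \<Sum>l\<in>I. inner (\<delta> i j) (\<delta> l j) * Q j r i l)"
      by (rule sum.cong[OF refl], rule sum.swap)
    also have "\<dots> = (\<Sum>j\<in>J. \<Sum>i\<in>I. \<Sum>l\<in>I. \<Sum>r\<in>I. inner (\<delta> i j) (\<delta> l j) * Q j r i l)"
      by (rule sum.cong[OF refl], rule sum.cong[OF refl], rule sum.swap)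
    also have "\<dots> = (\<Sum>j\<in>J. \<Sum>i\<in>I. \<Sum>l\<in>I. inner (\<delta> i j) (\<delta> l j) * Mc j i l)"
      by (intro sum.cong refl) (simp add: sum_distrib_left[symmetric] Q_sum)
    also have "\<dots> = (\<Sum>j\<in>J. \<Sum>i\<in>I. inner (\<delta> i j) (acoef i j \<delta>))"
      unfolding sum_inner_acoef ..
    finally show ?thesis .
  qed
  have O: "(\<Sum>r\<in>I. \<Sum>j\<in>J. \<Sum>m\<in>J-{j}. inner (acoef r j \<delta>) (acoef r m \<delta>))
      = - (\<Sum>j\<in>J. \<Sum>r\<in>I. inner (\<delta> r j) (acoef r j \<delta>))"
  proof -
    have "(\<Sum>r\<in>I. \<Sum>j\<in>J. \<Sum>m\<in>J-{j}. inner (acoef r j \<delta>) (acoef r m \<delta>))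
        = (\<Sum>j\<in>J. \<Sum>r\<in>I. \<Sum>m\<in>J-{j}. inner (acoef r j \<delta>) (acoef r m \<delta>))" by (rule sum.swap)
    also have "\<dots> = (\<Sum>j\<in>J. \<Sum>r\<in>I. inner (acoef r j \<delta>) (- \<delta> r j))"
    proof (intro sum.cong refl)
      fix j r assume j: "j \<in> J" and r: "r \<in> I"
      have "(\<Sum>m\<in>J-{j}. inner (acoef r j \<delta>) (acoef r m \<delta>)) = inner (acoef r j \<delta>) (\<Sum>m\<in>J-{j}. acoef r m \<delta>)"
        by (simp add: inner_sum_right)
      also have "(\<Sum>m\<in>J-{j}. acoef r m \<delta>) = - \<delta> r j" using hom j r by simp
      finally show "(\<Sum>m\<in>J-{j}. inner (acoef r j \<delta>) (acoef r m \<delta>)) = inner (acoef r j \<delta>) (- \<delta> r j)" .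
    qed
    also have "\<dots> = - (\<Sum>j\<in>J. \<Sum>r\<in>I. inner (\<delta> r j) (acoef r j \<delta>))"
      by (simp add: sum_negf inner_commute)
    finally show ?thesis .
  qed
  have "(\<Sum>r\<in>I. Tq (\<lambda>q. k q r) \<delta>) = (\<Sum>r\<in>I. \<Sum>j\<in>J. \<Sum>i\<in>I. \<Sum>l\<in>I. inner (\<delta> i j) (\<delta> l j) * Q j r i l)
      + (\<Sum>r\<in>I. \<Sum>j\<in>J. \<Sum>m\<in>J-{j}. inner (acoef r j \<delta>) (acoef r m \<delta>))"
    unfolding Tq_split E1 mu1 by (simp add: sum.distrib)
  also have "\<dots> = 0" unfolding D O by simp
  finally show ?thesis .
qed

lemma part3_alg:
  fixes \<delta> :: "nat \<Rightarrow> nat \<Rightarrow> 'h::real_inner"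
  assumes cons: "\<forall>j\<in>J. (\<Sum>i\<in>I. \<delta> i j) = 0"
  shows "Tq (\<lambda>q y. S q y / N) \<delta> = (\<Sum>j\<in>J. \<Sum>i\<in>I. inner (\<delta> i j) (acoef i j \<delta>)) / N"
proof -
  have E: "Eq (\<lambda>q y. S q y / N) j i j l = Mc j i l / N" if j: "j \<in> J" for j i l
  proof -
    have "Eq (\<lambda>q y. S q y / N) j i j l = (\<integral>y. k j i y * w j l y / N \<partial>M j)"
      unfolding Eq_def if_P[OF refl] by (rule int_cong_D[OF j]) (simp add: S_w[OF j, symmetric])
    then show ?thesis unfolding Mc_w by simp
  qed
  have mu: "mu (\<lambda>q y. S q y / N) \<delta> j = 0" if j: "j \<in> J" for j
  proof -
    have "mu (\<lambda>q y. S q y / N) \<delta> j = (\<Sum>i\<in>I. (1 / N) *\<^sub>R \<delta> i j)"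
      unfolding mu_def using int_Sw[OF j] by (intro sum.cong refl) (simp add: mult_ac)
    also have "\<dots> = (1 / N) *\<^sub>R (\<Sum>i\<in>I. \<delta> i j)" by (simp add: scaleR_sum_right)
    finally show ?thesis using cons j by simp
  qed
  have A: "(\<Sum>j\<in>J. \<Sum>i\<in>I. \<Sum>l\<in>I. inner (\<delta> i j) (\<delta> l j) * Eq (\<lambda>q y. S q y / N) j i j l)
      = (\<Sum>j\<in>J. \<Sum>i\<in>I. \<Sum>l\<in>I. inner (\<delta> i j) (\<delta> l j) * (Mc j i l / N))"
    by (intro sum.cong refl arg_cong2[where f="(*)"] E) auto
  have B: "(\<Sum>j\<in>J. \<Sum>m\<in>J-{j}. inner (mu (\<lambda>q y. S q y / N) \<delta> j) (mu (\<lambda>q y. S q y / N) \<delta> m)) = 0"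
  proof (intro sum.neutral ballI)
    fix j m assume j: "j \<in> J" and m: "m \<in> J - {j}"
    then have mJ: "m \<in> J" by auto
    show "inner (mu (\<lambda>q y. S q y / N) \<delta> j) (mu (\<lambda>q y. S q y / N) \<delta> m) = 0"
      by (simp add: mu[OF j])
  qed
  have "Tq (\<lambda>q y. S q y / N) \<delta> = (\<Sum>j\<in>J. \<Sum>i\<in>I. \<Sum>l\<in>I. inner (\<delta> i j) (\<delta> l j) * Mc j i l / N)"
    unfolding Tq_split A B by simp
  also have "\<dots> = (\<Sum>j\<in>J. \<Sum>i\<in>I. inner (\<delta> i j) (acoef i j \<delta>)) / N"
    unfolding sum_inner_acoef[symmetric] by (simp add: sum_divide_distrib)
  finally show ?thesis .
qed

end


context sbf begin

lemma PD_eq: "PD d L D h K n \<xi> = density (PiM J M) (\<lambda>x. ennreal (pD d L D h K n \<xi> x))"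
proof -
  have "PiM {1..d} (\<lambda>j. restrict_space (Leb (L j)) (D j)) = PiM J M"
    by (rule PiM_cong) (auto simp: M_J)
  then show ?thesis unfolding PD_def by simp
qed

lemma space_PM: "x \<in> space (PiM J M) \<Longrightarrow> j \<in> J \<Longrightarrow> x j \<in> D j"
  by (auto simp: space_PiM PiE_iff space_M)

lemma comp_meas: "j \<in> J \<Longrightarrow> g \<in> borel_measurable (M j) \<Longrightarrow> (\<lambda>x. g (x j)) \<in> borel_measurable (PiM J M)"
  by (rule measurable_compose[OF measurable_component_singleton]) auto

lemma pD_meas: "(\<lambda>x. pD d L D h K n \<xi> x) \<in> borel_measurable (PiM J M)"
  unfolding pD_eq
  by (intro borel_measurable_divide borel_measurable_const borel_measurable_sum borel_measurable_prod comp_meas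
      bm_meas bm_k) auto

lemma pD_nonneg: "pD d L D h K n \<xi> x \<ge> 0"
  unfolding pD_eq using N_pos k_nonneg by (auto intro!: divide_nonneg_pos sum_nonneg prod_nonneg)

lemma fsol_diff: "fsol (\<lambda>i j. b i j - b' i j) j y = fsol b j y - fsol b' j y"
  unfolding fsol_def by (simp add: scaleR_diff_right sum_subtractf)

lemma ae_zero:
  fixes \<delta> :: "nat \<Rightarrow> nat \<Rightarrow> 'h::{real_inner,banach,second_countable_topology}"
  assumes hom: "\<forall>i\<in>I. \<forall>j\<in>J. \<delta> i j = - (\<Sum>m\<in>J-{j}. acoef i m \<delta>)"
  shows "AE x in PiM J M. pD d L D h K n \<xi> x * (norm (\<Sum>j\<in>J. fsol \<delta> j (x j)))\<^sup>2 = 0"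
proof -
  let ?n = "\<lambda>x. (norm (\<Sum>j\<in>J. fsol \<delta> j (x j)))\<^sup>2"
  have rho: "\<And>q. q \<in> J \<Longrightarrow> bm q (\<lambda>y. k q r y)" "\<And>q. q \<in> J \<Longrightarrow> integral\<^sup>L (M q) (\<lambda>y. k q r y) = 1"
    if r: "r \<in> I" for r
    using k_int r by auto
  have e: "pD d L D h K n \<xi> x * ?n x = (\<Sum>r\<in>I. (\<Prod>q\<in>J. k q r (x q)) * ?n x) / N" for x
    unfolding pD_eq by (simp add: sum_distrib_right)
  have ir: "integrable (PiM J M) (\<lambda>x. (\<Prod>q\<in>J. k q r (x q)) * ?n x)" if r: "r \<in> I" for r
    using PF(1)[OF rho[OF r]] .
  have int: "integrable (PiM J M) (\<lambda>x. pD d L D h K n \<xi> x * ?n x)"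
    unfolding e using ir by (intro integrable_divide Bochner_Integration.integrable_sum) auto
  have "integral\<^sup>L (PiM J M) (\<lambda>x. pD d L D h K n \<xi> x * ?n x) = (\<Sum>r\<in>I. integral\<^sup>L (PiM J M) (\<lambda>x. (\<Prod>q\<in>J. k q r (x q)) * ?n x)) / N"
    unfolding e using ir by (simp add: Bochner_Integration.integral_sum)
  also have "\<dots> = (\<Sum>r\<in>I. Tq (\<lambda>q. k q r) \<delta>) / N"
    unfolding Tq_def using PF(2)[OF rho] by (intro arg_cong[where f="\<lambda>x. x / N"] sum.cong refl) auto
  also have "\<dots> = 0" using part2_alg[OF hom] by simp
  finally have "integral\<^sup>L (PiM J M) (\<lambda>x. pD d L D h K n \<xi> x * ?n x) = 0" .
  then show ?thesis
    using integral_nonneg_eq_0_iff_AE[OF int] pD_nonneg by (auto intro: AE_I2)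
qed

lemma part2:
  fixes Y :: "nat \<Rightarrow> 'h::{real_inner,banach,second_countable_topology}"
  assumes sys: "SBF_system d L D h K n \<xi> Y f" and sys': "SBF_system d L D h K n \<xi> Y f'"
  shows "AE x in PD d L D h K n \<xi>. (\<Sum>j\<in>J. f j (x j)) = (\<Sum>j\<in>J. f' j (x j))"
proof -
  obtain b where b: "\<forall>i\<in>I. \<forall>j\<in>J. b i j = Yt Y i - (\<Sum>m\<in>J-{j}. acoef i m b)" and rb: "\<forall>j\<in>J. \<forall>x\<in>D j. f j x = fsol b j x"
    using rep_solution[OF sys] by blast
  obtain b' where b': "\<forall>i\<in>I. \<forall>j\<in>J. b' i j = Yt Y i - (\<Sum>m\<in>J-{j}. acoef i m b')" and rb': "\<forall>j\<in>J. \<forall>x\<in>D j. f' j x = fsol b' j x"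
    using rep_solution[OF sys'] by blast
  define \<delta> where "\<delta> i j = b i j - b' i j" for i j
  have hom: "\<forall>i\<in>I. \<forall>j\<in>J. \<delta> i j = - (\<Sum>m\<in>J-{j}. acoef i m \<delta>)"
    unfolding \<delta>_def[abs_def] acoef_diff using b b' by (simp add: sum_subtractf)
  have ae: "AE x in PiM J M. pD d L D h K n \<xi> x * (norm (\<Sum>j\<in>J. fsol \<delta> j (x j)))\<^sup>2 = 0"
    by (rule ae_zero[OF hom])
  have "AE x in PiM J M. 0 < ennreal (pD d L D h K n \<xi> x) \<longrightarrow> (\<Sum>j\<in>J. f j (x j)) = (\<Sum>j\<in>J. f' j (x j))"
    using ae AE_space
  proof (eventually_elim)
    case (elim x)
    show ?case
    proof
      assume "0 < ennreal (pD d L D h K n \<xi> x)"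
      then have "pD d L D h K n \<xi> x > 0" by (simp add: ennreal_less_zero_iff)
      then have z: "(\<Sum>j\<in>J. fsol \<delta> j (x j)) = 0" using elim(1) by simp
      have "(\<Sum>j\<in>J. f j (x j)) - (\<Sum>j\<in>J. f' j (x j)) = (\<Sum>j\<in>J. fsol \<delta> j (x j))"
        unfolding sum_subtractf[symmetric] \<delta>_def[abs_def] fsol_diff using rb rb' space_PM[OF elim(2)]
        by (intro sum.cong refl) auto
      then show "(\<Sum>j\<in>J. f j (x j)) = (\<Sum>j\<in>J. f' j (x j))" using z by simp
    qed
  qed
  moreover have "(\<lambda>x. ennreal (pD d L D h K n \<xi> x)) \<in> borel_measurable (PiM J M)"
    using pD_meas by measurable
  ultimately show ?thesis unfolding PD_eq by (subst AE_density) auto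
qed

lemma Xj:
  fixes \<delta> :: "nat \<Rightarrow> nat \<Rightarrow> 'h::{real_inner,banach,second_countable_topology}"
  assumes j: "j \<in> J"
  shows "bm j (\<lambda>y. S j y * (norm (fsol \<delta> j y))\<^sup>2)"
    and "integral\<^sup>L (M j) (\<lambda>y. S j y * (norm (fsol \<delta> j y))\<^sup>2) = (\<Sum>i\<in>I. inner (\<delta> i j) (acoef i j \<delta>))"
proof -
  have e: "S j y * (norm (fsol \<delta> j y))\<^sup>2 = (\<Sum>i\<in>I. \<Sum>l\<in>I. inner (\<delta> i j) (\<delta> l j) * (S j y * (w j i y * w j l y)))" for y
    unfolding power2_norm_eq_inner inner_fsol_fsol sum_distrib_left
    by (intro sum.cong refl) (simp add: mult_ac)
  have b1: "bm j (\<lambda>y. inner (\<delta> i j) (\<delta> l j) * (S j y * (w j i y * w j l y)))" if "i \<in> I" "l \<in> I" for i l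
    using j that by (intro bm_mult bm_const bm_S bm_w)
  have b2: "bm j (\<lambda>y. \<Sum>l\<in>I. inner (\<delta> i j) (\<delta> l j) * (S j y * (w j i y * w j l y)))" if "i \<in> I" for i
    using b1 that by (intro bm_sum finI)
  show "bm j (\<lambda>y. S j y * (norm (fsol \<delta> j y))\<^sup>2)"
    unfolding e by (rule bm_sum[OF finI b2])
  have "integral\<^sup>L (M j) (\<lambda>y. S j y * (norm (fsol \<delta> j y))\<^sup>2)
      = (\<Sum>i\<in>I. integral\<^sup>L (M j) (\<lambda>y. \<Sum>l\<in>I. inner (\<delta> i j) (\<delta> l j) * (S j y * (w j i y * w j l y))))"
    unfolding e by (rule int_sum_bm[OF finI b2])
  also have "\<dots> = (\<Sum>i\<in>I. \<Sum>l\<in>I. integral\<^sup>L (M j) (\<lambda>y. inner (\<delta> i j) (\<delta> l j) * (S j y * (w j i y * w j l y))))"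
    by (rule sum.cong[OF refl], rule int_sum_bm[OF finI b1], assumption+)
  also have "\<dots> = (\<Sum>i\<in>I. \<Sum>l\<in>I. inner (\<delta> i j) (\<delta> l j) * Mc j i l)"
  proof (intro sum.cong refl)
    fix i l
    have "integral\<^sup>L (M j) (\<lambda>y. S j y * (w j i y * w j l y)) = Mc j i l"
      unfolding Mc_w by (rule int_cong_D[OF j]) (simp add: S_w[OF j, symmetric])
    then show "integral\<^sup>L (M j) (\<lambda>y. inner (\<delta> i j) (\<delta> l j) * (S j y * (w j i y * w j l y))) = inner (\<delta> i j) (\<delta> l j) * Mc j i l"
      by simp
  qed
  also have "\<dots> = (\<Sum>i\<in>I. inner (\<delta> i j) (acoef i j \<delta>))" unfolding sum_inner_acoef ..
  finally show "integral\<^sup>L (M j) (\<lambda>y. S j y * (norm (fsol \<delta> j y))\<^sup>2) = (\<Sum>i\<in>I. inner (\<delta> i j) (acoef i j \<delta>))" .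
qed

lemma part3:
  fixes Y :: "nat \<Rightarrow> 'h::{real_inner,banach,second_countable_topology}"
  assumes strong: "\<forall>x. (\<forall>j\<in>J. x j \<in> D j) \<longrightarrow>
           (\<exists>i\<in>{1..n}. inD d D \<xi> i \<and> (\<forall>j\<in>J. enorm (L j) (\<lambda>k. \<xi> i j k - x j k) < h j))"
    and sys: "SBF_system d L D h K n \<xi> Y f" and cons: "SBF_constraints d L D h K n \<xi> f"
    and sys': "SBF_system d L D h K n \<xi> Y f'" and cons': "SBF_constraints d L D h K n \<xi> f'"
  shows "\<forall>j\<in>J. AE t in Leb (L j). t \<in> D j \<longrightarrow> f j t = f' j t"
proof -
  obtain b where b: "\<forall>i\<in>I. \<forall>j\<in>J. b i j = Yt Y i - (\<Sum>m\<in>J-{j}. acoef i m b)" and rb: "\<forall>j\<in>J. \<forall>x\<in>D j. f j x = fsol b j x"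
    using rep_solution[OF sys] by blast
  obtain b' where b': "\<forall>i\<in>I. \<forall>j\<in>J. b' i j = Yt Y i - (\<Sum>m\<in>J-{j}. acoef i m b')" and rb': "\<forall>j\<in>J. \<forall>x\<in>D j. f' j x = fsol b' j x"
    using rep_solution[OF sys'] by blast
  define \<delta> where "\<delta> i j = b i j - b' i j" for i j
  have hom: "\<forall>i\<in>I. \<forall>j\<in>J. \<delta> i j = - (\<Sum>m\<in>J-{j}. acoef i m \<delta>)"
    unfolding \<delta>_def[abs_def] acoef_diff using b b' by (simp add: sum_subtractf)
  have csum: "\<forall>j\<in>J. (\<Sum>i\<in>I. \<delta> i j) = 0"
    unfolding \<delta>_def using cons_sum[OF cons rb] cons_sum[OF cons' rb'] by (simp add: sum_subtractf)
  let ?n = "\<lambda>x. (norm (\<Sum>j\<in>J. fsol \<delta> j (x j)))\<^sup>2"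
  have pos: "pD d L D h K n \<xi> x > 0" if x: "x \<in> space (PiM J M)" for x
  proof -
    obtain i where i: "i \<in> {1..n}" "inD d D \<xi> i" and e: "\<forall>j\<in>J. enorm (L j) (\<lambda>k. \<xi> i j k - x j k) < h j"
      using strong space_PM[OF x] by blast
    have iI: "i \<in> I" using i unfolding I_def by auto
    have pp: "(\<Prod>j\<in>J. k j i (x j)) > 0" using k_pos e by (intro prod_pos) auto
    have "(\<Prod>j\<in>J. k j i (x j)) \<le> (\<Sum>r\<in>I. \<Prod>j\<in>J. k j r (x j))"
      using iI finI k_nonneg by (intro member_le_sum[of i I "\<lambda>r. \<Prod>j\<in>J. k j r (x j)"] prod_nonneg) auto
    then show ?thesis unfolding pD_eq using pp N_pos by simp
  qed
  have "AE x in PiM J M. ?n x = 0"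
    using ae_zero[OF hom] AE_space by eventually_elim (use pos in fastforce)
  then have "AE x in PiM J M. (\<Prod>q\<in>J. S q (x q) / N) * ?n x = 0" by eventually_elim simp
  then have "integral\<^sup>L (PiM J M) (\<lambda>x. (\<Prod>q\<in>J. S q (x q) / N) * ?n x) = 0" by (rule integral_eq_zero_AE)
  moreover have "integral\<^sup>L (PiM J M) (\<lambda>x. (\<Prod>q\<in>J. S q (x q) / N) * ?n x) = Tq (\<lambda>q y. S q y / N) \<delta>"
    unfolding Tq_def using int_S by (intro PF(2)) (auto intro!: bm_mult bm_S simp: divide_inverse)
  ultimately have "(\<Sum>j\<in>J. \<Sum>i\<in>I. inner (\<delta> i j) (acoef i j \<delta>)) = 0"
    unfolding part3_alg[OF csum] using N_pos by simp
  moreover have "(\<Sum>j\<in>J. integral\<^sup>L (M j) (\<lambda>y. S j y * (norm (fsol \<delta> j y))\<^sup>2)) = (\<Sum>j\<in>J. \<Sum>i\<in>I. inner (\<delta> i j) (acoef i j \<delta>))"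
    by (intro sum.cong refl Xj(2)) auto
  ultimately have X0: "(\<Sum>j\<in>J. integral\<^sup>L (M j) (\<lambda>y. S j y * (norm (fsol \<delta> j y))\<^sup>2)) = 0"
    by simp
  have Xnn: "integral\<^sup>L (M j) (\<lambda>y. S j y * (norm (fsol \<delta> j y))\<^sup>2) \<ge> 0" if j: "j \<in> J" for j
    using S_nonneg[OF j] by (intro integral_nonneg_AE AE_I2) simp
  show ?thesis
  proof
    fix j assume j: "j \<in> J"
    have "integral\<^sup>L (M j) (\<lambda>y. S j y * (norm (fsol \<delta> j y))\<^sup>2) = 0"
      using X0 Xnn j by (subst (asm) sum_nonneg_eq_0_iff) auto
    then have "AE y in M j. S j y * (norm (fsol \<delta> j y))\<^sup>2 = 0"
      using integral_nonneg_eq_0_iff_AE[OF bm_int[OF Xj(1)[OF j]]] S_nonneg[OF j] by auto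
    then have "AE y in M j. f j y = f' j y"
      using AE_space
    proof eventually_elim
      case (elim y)
      then have y: "y \<in> D j" using space_M[OF j] by simp
      then have "fsol \<delta> j y = 0" using elim(1) S_pos[OF j y] by simp
      then show ?case using rb rb' j y unfolding \<delta>_def[abs_def] fsol_diff by simp
    qed
    then show "AE t in Leb (L j). t \<in> D j \<longrightarrow> f j t = f' j t"
      unfolding M_J[OF j] AE_restrict_space_iff[OF Dint[OF j]] .
  qed
qed

end

theorem proposition7:
  fixes d n :: nat
    and L :: "nat \<Rightarrow> nat"
    and D :: "nat \<Rightarrow> (nat \<Rightarrow> real) set"
    and h :: "nat \<Rightarrow> real"
    and K :: "nat \<Rightarrow> real \<Rightarrow> real"
    and \<xi> :: "nat \<Rightarrow> nat \<Rightarrow> (nat \<Rightarrow> real)"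
    and Y :: "nat \<Rightarrow> 'h::{real_inner,banach,second_countable_topology}"
  assumes d: "d \<ge> 1"
    and L: "\<forall>j\<in>{1..d}. L j \<ge> 1"
    and D_space: "\<forall>j\<in>{1..d}. D j \<subseteq> space (Leb (L j))"
    and D_compact: "\<forall>j\<in>{1..d}. compact (D j)"
    and D_pos: "\<forall>j\<in>{1..d}. measure (Leb (L j)) (D j) > 0"
    and xi_space: "\<forall>i\<in>{1..n}. \<forall>j\<in>{1..d}. \<xi> i j \<in> space (Leb (L j))"
    and some_in_D: "\<exists>i\<in>{1..n}. inD d D \<xi> i"
    and h: "\<forall>j\<in>{1..d}. h j > 0"
    and K_cont: "\<forall>j\<in>{1..d}. continuous_on {0..} (K j)"
    and K_nonneg: "\<forall>j\<in>{1..d}. \<forall>u\<ge>0. K j u \<ge> 0"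
    and K_pos: "\<forall>j\<in>{1..d}. \<forall>u\<in>{0..<1}. K j u > 0"
    and K_zero: "\<forall>j\<in>{1..d}. \<forall>u\<ge>1. K j u = 0"
    and condA: "\<forall>j\<in>{1..d}. \<forall>x\<in>D j. \<exists>i\<in>{1..n}. inD d D \<xi> i \<and>
                   enorm (L j) (\<lambda>k. \<xi> i j k - x k) < h j"
  shows "(\<exists>f. SBF_system d L D h K n \<xi> Y f \<and> SBF_constraints d L D h K n \<xi> f)
    \<and> (\<forall>f f'. SBF_system d L D h K n \<xi> Y f \<and> SBF_system d L D h K n \<xi> Y f' \<longrightarrow>
         (AE x in PD d L D h K n \<xi>. (\<Sum>j\<in>{1..d}. f j (x j)) = (\<Sum>j\<in>{1..d}. f' j (x j))))
    \<and> ((\<forall>x. (\<forall>j\<in>{1..d}. x j \<in> D j) \<longrightarrow>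
           (\<exists>i\<in>{1..n}. inD d D \<xi> i \<and> (\<forall>j\<in>{1..d}. enorm (L j) (\<lambda>k. \<xi> i j k - x j k) < h j)))
       \<longrightarrow> (\<forall>f f'. SBF_system d L D h K n \<xi> Y f \<and> SBF_constraints d L D h K n \<xi> f
              \<and> SBF_system d L D h K n \<xi> Y f' \<and> SBF_constraints d L D h K n \<xi> f' \<longrightarrow>
              (\<forall>j\<in>{1..d}. AE t in Leb (L j). t \<in> D j \<longrightarrow> f j t = f' j t)))"
proof -
  interpret sbf d n L D h K \<xi>
    by unfold_locales (use d D_space D_pos some_in_D h K_cont K_nonneg K_pos K_zero condA in auto)
  show ?thesis using existence[where Y=Y] part2[where Y=Y] part3[where Y=Y] by blast
qed

end
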